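(* Let $q'\ge2$ be an integer. For every finite field $F$, the network $\mathcal{N}_2$ (with parameter $q'$) has a $2$-dimensional VLNC solution over $F$ if and only if the characteristic of $F$ divides $q'$.
   Context: Vector linear network coding: each source $v$ generates $x_v\in F^d$; an edge out of a source $v$ carries $Ax_v$ for a $d\times d$ matrix $A$ over $F$; an edge out of an intermediate node carries $\sum A_{e',e}y_{e'}$ over the edges $e'$ entering that node; a terminal computes vectors $\sum B_ey_e$ over its incoming edges; a $d$-dimensional VLNC solution over $F$ is such a code with which every terminal computes each demanded message for all message choices. The Char-$q$-$s$ network (integer $q\ge2$): sources $s,x_1,\dots,x_{q+2}$; intermediate nodes $m_1,\dots,m_{q+3},n_1,\dots,n_{q+3}$; terminals $r_1,\dots,r_{q+3}$; edges: $(x_1,m_i)$ for $1\le i\le q+1$; $(s,m_1)$ and $(s,m_i)$ for $4\le i\le q+3$; $(x_i,m_j)$ for $2\le i,j\le q+2$, $i\ne j$; $(x_i,m_{q+3})$ for $1\le i\le q+2$; $e_i=(m_i,n_i)$ for $1\le i\le q+3$; $(n_i,r_i)$ for $1\le i\le q+2$; $(n_{q+3},r_i)$ and $(n_i,r_{q+3})$ for $1\le i\le q+2$; $(x_i,r_1)$ for $2\le i\le q+1$; $(x_1,r_{q+2})$; $(s,r_2)$; $(s,r_3)$. Demands: $r_1$ demands $x_{q+2}$; $r_i$ demands $x_i$ for $2\le i\le q+2$; $r_{q+3}$ demands $x_1$; no terminal demands $s$. The generalized M-network $\mathcal{M}_3$: sources in three groups $G_1=(\bar a,\bar b,\bar c)$,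 $G_2=(\bar r,\bar s,\bar w)$, $G_3=(\bar x,\bar y,\bar z)$; intermediate nodes $\bar u_1,\bar u_2,\bar u_3,\bar v_1,\dots,\bar v_5$; edges from each source of $G_i$ to $\bar u_i$, edges $(\bar u_i,\bar v_i),(\bar u_i,\bar v_4),(\bar u_i,\bar v_5)$ for $i=1,2,3$, and $(\bar v_i,\bar t_j)$ for $1\le i\le5$, $1\le j\le27$; terminals $\bar t_1,\dots,\bar t_{27}$, where $\bar t_j$ demands the $j$-th triple in the lexicographic order of $G_1\times G_2\times G_3$ (e.g. $\bar t_1$: $\bar a,\bar r,\bar x$; $\bar t_2$: $\bar a,\bar r,\bar y$; $\bar t_4$: $\bar a,\bar s,\bar x$; $\bar t_{25}$: $\bar c,\bar w,\bar x$; $\bar t_{27}$: $\bar c,\bar w,\bar z$). The network $\mathcal{N}_2$ (integer $q'\ge2$) is obtained from the disjoint union of $\mathcal{M}_3$ and a copy of the Char-$q'$-$s$ network (nodes renamed $\bar m_i,\bar n_i$, terminals $\rho_i$, edges $\bar e_i=(\bar m_i,\bar n_i)$, sources $x_i$ renamed $\bar x_i$ for $2\le i\le q'+2$) by identifying $x_1$ with $\bar a$ and $s$ with $\bar x$ (so $\rho_{q'+3}$ demands $\bar a$), and adding the edges: $(\bar w,\bar t_j)$ for $j\in\{7,8,9,16,17,18\}$; $(\bar c,\bar t_j)$ for $19\le j\le24$; $(\bar a,\bar t_{25})$; $(\bar y,\bar t_{26})$; $(\bar n_1,\bar t_{25})$. All other demands are unchanged. *)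

theory Defs
  imports "HOL-Analysis.Finite_Cartesian_Product"
begin

text \<open>A network is given by its set of source nodes, its set of (directed) edges,
  each edge being a pair (tail, head), and its demand function: the set of
  sources demanded by each node (empty for non-terminals).\<close>

record 'v network =
  srcs :: "'v set"
  edges :: "('v \<times> 'v) set"
  demands :: "'v \<Rightarrow> 'v set"

definition in_edges :: "'v network \<Rightarrow> 'v \<Rightarrow> ('v \<times> 'v) set" where
  "in_edges N v = {e \<in> edges N. snd e = v}"

definition vlnc_edge_values ::
  "'v network \<Rightarrow> ('v \<times> 'v \<Rightarrow> 'a::field^'d^'d) \<Rightarrow> ('v \<times> 'v \<Rightarrow> 'v \<times> 'v \<Rightarrow> 'a^'d^'d)
   \<Rightarrow> ('v \<Rightarrow> 'a^'d) \<Rightarrow> ('v \<times> 'v \<Rightarrow> 'a^'d) \<Rightarrow> bool" where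
  "vlnc_edge_values N A K x y \<longleftrightarrow>
     (\<forall>e \<in> edges N.
        (fst e \<in> srcs N \<longrightarrow> y e = A e *v x (fst e)) \<and>
        (fst e \<notin> srcs N \<longrightarrow> y e = (\<Sum>e'\<in>in_edges N (fst e). K e' e *v y e')))"

text \<open>In an acyclic network the edge values are uniquely
  determined by x, A and K.\<close>

definition is_vlnc_solution ::
  "'v network \<Rightarrow> ('v \<times> 'v \<Rightarrow> 'a::field^'d^'d) \<Rightarrow> ('v \<times> 'v \<Rightarrow> 'v \<times> 'v \<Rightarrow> 'a^'d^'d)
   \<Rightarrow> ('v \<Rightarrow> 'v \<Rightarrow> 'v \<times> 'v \<Rightarrow> 'a^'d^'d) \<Rightarrow> bool" where
  "is_vlnc_solution N A K B \<longleftrightarrow>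
     (\<forall>x y. vlnc_edge_values N A K x y \<longrightarrow>
        (\<forall>t. \<forall>s \<in> demands N t.
            (\<Sum>e\<in>in_edges N t. B t s e *v y e) = x s))"

text \<open>Nodes: the nine sources of M_3 (a,b,c | r,s,w | x,y,z, all barred), the
  sources XB i (= renamed x_i, 2 \<le> i \<le> q'+2) of the Char-q'-s copy, whose x_1 is
  identified with a-bar and s with x-bar; intermediate nodes Mn i, Nn i (the
  barred m_i, n_i), Ub i, Vn i; terminals Rho i and Tn j.\<close>

datatype node = SA | SB | SC | SR | SS | SW | SX | SY | SZ | XB nat
  | Mn nat | Nn nat | Rho nat | Ub nat | Vn nat | Tn nat

definition N2_srcs :: "nat \<Rightarrow> node set" where
  "N2_srcs q = {SA, SB, SC, SR, SS, SW, SX, SY, SZ} \<union> {XB i | i. 2 \<le> i \<and> i \<le> q + 2}"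

definition char_edges :: "nat \<Rightarrow> (node \<times> node) set" where
  "char_edges q =
     {(SA, Mn i) | i. 1 \<le> i \<and> i \<le> q + 1}
   \<union> {(SX, Mn 1)} \<union> {(SX, Mn i) | i. 4 \<le> i \<and> i \<le> q + 3}
   \<union> {(XB i, Mn j) | i j. 2 \<le> i \<and> i \<le> q + 2 \<and> 2 \<le> j \<and> j \<le> q + 2 \<and> i \<noteq> j}
   \<union> {(SA, Mn (q + 3))} \<union> {(XB i, Mn (q + 3)) | i. 2 \<le> i \<and> i \<le> q + 2}
   \<union> {(Mn i, Nn i) | i. 1 \<le> i \<and> i \<le> q + 3}
   \<union> {(Nn i, Rho i) | i. 1 \<le> i \<and> i \<le> q + 2}
   \<union> {(Nn (q + 3), Rho i) | i. 1 \<le> i \<and> i \<le> q + 2}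
   \<union> {(Nn i, Rho (q + 3)) | i. 1 \<le> i \<and> i \<le> q + 2}
   \<union> {(XB i, Rho 1) | i. 2 \<le> i \<and> i \<le> q + 1}
   \<union> {(SA, Rho (q + 2))}
   \<union> {(SX, Rho 2), (SX, Rho 3)}"

definition G1 :: "node list" where "G1 = [SA, SB, SC]"
definition G2 :: "node list" where "G2 = [SR, SS, SW]"
definition G3 :: "node list" where "G3 = [SX, SY, SZ]"

definition M3_edges :: "(node \<times> node) set" where
  "M3_edges =
     {(v, Ub 1) | v. v \<in> set G1} \<union> {(v, Ub 2) | v. v \<in> set G2} \<union> {(v, Ub 3) | v. v \<in> set G3}
   \<union> {(Ub i, Vn i) | i. 1 \<le> i \<and> i \<le> 3}
   \<union> {(Ub i, Vn 4) | i. 1 \<le> i \<and> i \<le> 3}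
   \<union> {(Ub i, Vn 5) | i. 1 \<le> i \<and> i \<le> 3}
   \<union> {(Vn i, Tn j) | i j. 1 \<le> i \<and> i \<le> 5 \<and> 1 \<le> j \<and> j \<le> 27}"

definition extra_edges :: "(node \<times> node) set" where
  "extra_edges =
     {(SW, Tn j) | j. j \<in> {7, 8, 9, 16, 17, 18}}
   \<union> {(SC, Tn j) | j. 19 \<le> j \<and> j \<le> 24}
   \<union> {(SA, Tn 25), (SY, Tn 26), (Nn 1, Tn 25)}"

text \<open>Tn j (1 \<le> j \<le> 27) demands the j-th triple in lexicographic order of
  G1 \<times> G2 \<times> G3.\<close>

definition N2_demands :: "nat \<Rightarrow> node \<Rightarrow> node set" where
  "N2_demands q v = (case v of
      Rho i \<Rightarrow> (if i = 1 then {XB (q + 2)}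
                else if 2 \<le> i \<and> i \<le> q + 2 then {XB i}
                else if i = q + 3 then {SA} else {})
    | Tn j \<Rightarrow> (if 1 \<le> j \<and> j \<le> 27 then
                 {G1 ! ((j - 1) div 9), G2 ! (((j - 1) div 3) mod 3), G3 ! ((j - 1) mod 3)}
               else {})
    | _ \<Rightarrow> {})"

definition N2 :: "nat \<Rightarrow> node network" where
  "N2 q = \<lparr> srcs = N2_srcs q, edges = char_edges q \<union> M3_edges \<union> extra_edges,
            demands = N2_demands q \<rparr>"

end

theory Submission
  imports Defs "HOL-Analysis.Cartesian_Space" "HOL-Library.Product_Plus"
begin

lemma finite_edges: "finite (edges (N2 q))"
proof -
  have a: "{(XB i, Mn j) | i j. 2 \<le> i \<and> i \<le> q + 2 \<and> 2 \<le> j \<and> j \<le> q + 2 \<and> i \<noteq> j}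
      \<subseteq> (\<lambda>(i,j). (XB i, Mn j)) ` ({2..q+2} \<times> {2..q+2})" by auto
  have b: "{(Vn i, Tn j) | i j. 1 \<le> i \<and> i \<le> 5 \<and> 1 \<le> j \<and> j \<le> (27::nat)}
      \<subseteq> (\<lambda>(i,j). (Vn i, Tn j)) ` ({1..5} \<times> {1..27})" by auto
  show ?thesis
    unfolding N2_def char_edges_def M3_edges_def extra_edges_def G1_def G2_def G3_def
    using finite_subset[OF a] finite_subset[OF b]
    by auto
qed

lemma finite_in_edges: "finite (in_edges (N2 q) v)"
  unfolding in_edges_def using finite_edges by auto

definition mid1 :: "node \<Rightarrow> bool" where
  "mid1 v = (case v of Ub _ \<Rightarrow> True | Mn _ \<Rightarrow> True | _ \<Rightarrow> False)"
definition mid2 :: "node \<Rightarrow> bool" where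
  "mid2 v = (case v of Vn _ \<Rightarrow> True | Nn _ \<Rightarrow> True | _ \<Rightarrow> False)"

lemma edge_class:
  assumes "e \<in> edges (N2 q)"
  shows "fst e \<in> srcs (N2 q) \<or> mid1 (fst e) \<or> mid2 (fst e)"
  using assms unfolding N2_def char_edges_def M3_edges_def extra_edges_def G1_def G2_def G3_def
    N2_srcs_def mid1_def mid2_def
  by auto

lemma edge_mid1:
  assumes "e \<in> edges (N2 q)" "mid1 (snd e)"
  shows "fst e \<in> srcs (N2 q)"
  using assms unfolding N2_def char_edges_def M3_edges_def extra_edges_def G1_def G2_def G3_def
    N2_srcs_def mid1_def
  by auto

lemma edge_mid2:
  assumes "e \<in> edges (N2 q)" "mid2 (snd e)"
  shows "mid1 (fst e)"
  using assms unfolding N2_def char_edges_def M3_edges_def extra_edges_def G1_def G2_def G3_def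
    N2_srcs_def mid1_def mid2_def
  by auto

lemma mid_not_src: "mid1 v \<Longrightarrow> v \<notin> srcs (N2 q)" "mid2 v \<Longrightarrow> v \<notin> srcs (N2 q)"
  "mid1 v \<Longrightarrow> \<not> mid2 v"
  unfolding N2_def N2_srcs_def mid1_def mid2_def by (auto split: node.splits)

definition y1 :: "('v \<times> 'v \<Rightarrow> 'a::field^'d^'d) \<Rightarrow> ('v \<Rightarrow> 'a^'d) \<Rightarrow> 'v \<times> 'v \<Rightarrow> 'a^'d" where
  "y1 A x e = A e *v x (fst e)"
definition y2 :: "'v network \<Rightarrow> ('v \<times> 'v \<Rightarrow> 'a::field^'d^'d) \<Rightarrow> ('v \<times> 'v \<Rightarrow> 'v \<times> 'v \<Rightarrow> 'a^'d^'d)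
   \<Rightarrow> ('v \<Rightarrow> 'a^'d) \<Rightarrow> 'v \<times> 'v \<Rightarrow> 'a^'d" where
  "y2 N A K x e = (\<Sum>e'\<in>in_edges N (fst e). K e' e *v y1 A x e')"
definition y3 :: "'v network \<Rightarrow> ('v \<times> 'v \<Rightarrow> 'a::field^'d^'d) \<Rightarrow> ('v \<times> 'v \<Rightarrow> 'v \<times> 'v \<Rightarrow> 'a^'d^'d)
   \<Rightarrow> ('v \<Rightarrow> 'a^'d) \<Rightarrow> 'v \<times> 'v \<Rightarrow> 'a^'d" where
  "y3 N A K x e = (\<Sum>e'\<in>in_edges N (fst e). K e' e *v y2 N A K x e')"
definition yv :: "nat \<Rightarrow> (node \<times> node \<Rightarrow> 'a::field^'d^'d) \<Rightarrow> (node \<times> node \<Rightarrow> node \<times> node \<Rightarrow> 'a^'d^'d)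
   \<Rightarrow> (node \<Rightarrow> 'a^'d) \<Rightarrow> node \<times> node \<Rightarrow> 'a^'d" where
  "yv q A K x e = (if fst e \<in> srcs (N2 q) then y1 A x e
     else if mid1 (fst e) then y2 (N2 q) A K x e else y3 (N2 q) A K x e)"

lemma yv_ok: "vlnc_edge_values (N2 q) A K x (yv q A K x)"
  unfolding vlnc_edge_values_def
proof (intro ballI conjI impI)
  fix e assume e: "e \<in> edges (N2 q)"
  show "fst e \<in> srcs (N2 q) \<Longrightarrow> yv q A K x e = A e *v x (fst e)"
    by (simp add: yv_def y1_def)
  assume ns: "fst e \<notin> srcs (N2 q)"
  show "yv q A K x e = (\<Sum>e'\<in>in_edges (N2 q) (fst e). K e' e *v yv q A K x e')"
  proof (cases "mid1 (fst e)")
    case True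
    have "\<And>e'. e' \<in> in_edges (N2 q) (fst e) \<Longrightarrow> yv q A K x e' = y1 A x e'"
      using edge_mid1 True unfolding in_edges_def yv_def by auto
    then show ?thesis using True ns unfolding yv_def y2_def by (auto intro!: sum.cong)
  next
    case False
    then have m2: "mid2 (fst e)" using edge_class[OF e] ns by auto
    have "\<And>e'. e' \<in> in_edges (N2 q) (fst e) \<Longrightarrow> yv q A K x e' = y2 (N2 q) A K x e'"
      using edge_mid2 m2 mid_not_src unfolding in_edges_def yv_def by force
    then show ?thesis using False ns unfolding yv_def y3_def by (auto intro!: sum.cong)
  qed
qed

lemma yv_unique:
  assumes "vlnc_edge_values (N2 q) A K x y" "e \<in> edges (N2 q)"
  shows "y e = yv q A K x e"
proof -
  have h: "\<And>e. e \<in> edges (N2 q) \<Longrightarrow> fst e \<notin> srcs (N2 q) \<Longrightarrow>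
     y e = (\<Sum>e'\<in>in_edges (N2 q) (fst e). K e' e *v y e')"
    and hs: "\<And>e. e \<in> edges (N2 q) \<Longrightarrow> fst e \<in> srcs (N2 q) \<Longrightarrow> y e = A e *v x (fst e)"
    using assms(1) unfolding vlnc_edge_values_def by auto
  have h1: "y e = y1 A x e" if "e \<in> edges (N2 q)" "fst e \<in> srcs (N2 q)" for e
    using hs that unfolding y1_def by auto
  have h2: "y e = y2 (N2 q) A K x e" if "e \<in> edges (N2 q)" "mid1 (fst e)" for e
  proof -
    have "y e = (\<Sum>e'\<in>in_edges (N2 q) (fst e). K e' e *v y e')"
      using h that mid_not_src by auto
    also have "\<dots> = y2 (N2 q) A K x e" unfolding y2_def
      using h1 edge_mid1 that(2) by (auto simp: in_edges_def intro!: sum.cong)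
    finally show ?thesis .
  qed
  have h3: "y e = y3 (N2 q) A K x e" if "e \<in> edges (N2 q)" "mid2 (fst e)" for e
  proof -
    have "y e = (\<Sum>e'\<in>in_edges (N2 q) (fst e). K e' e *v y e')"
      using h that mid_not_src by auto
    also have "\<dots> = y3 (N2 q) A K x e" unfolding y3_def
      using h2 edge_mid2 that(2) by (auto simp: in_edges_def intro!: sum.cong)
    finally show ?thesis .
  qed
  consider "fst e \<in> srcs (N2 q)" | "mid1 (fst e)" | "mid2 (fst e)" using edge_class[OF assms(2)] by blast
  then show ?thesis
  proof cases
    case 1 then show ?thesis using h1[OF assms(2)] unfolding yv_def by simp
  next
    case 2 then show ?thesis using h2[OF assms(2)] mid_not_src(1)[OF 2] unfolding yv_def by simp
  next
    case 3 then show ?thesis using h3[OF assms(2)] mid_not_src(2,3) unfolding yv_def by metis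
  qed
qed

lemma sol_iff:
  "is_vlnc_solution (N2 q) A K B \<longleftrightarrow>
    (\<forall>x t. \<forall>s\<in>demands (N2 q) t. (\<Sum>e\<in>in_edges (N2 q) t. B t s e *v yv q A K x e) = x s)"
proof
  assume "is_vlnc_solution (N2 q) A K B"
  then show "\<forall>x t. \<forall>s\<in>demands (N2 q) t. (\<Sum>e\<in>in_edges (N2 q) t. B t s e *v yv q A K x e) = x s"
    unfolding is_vlnc_solution_def using yv_ok by blast
next
  assume a: "\<forall>x t. \<forall>s\<in>demands (N2 q) t. (\<Sum>e\<in>in_edges (N2 q) t. B t s e *v yv q A K x e) = x s"
  show "is_vlnc_solution (N2 q) A K B"
    unfolding is_vlnc_solution_def
  proof (intro allI impI ballI)
    fix x y t s assume y: "vlnc_edge_values (N2 q) A K x y" and s: "s \<in> demands (N2 q) t"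
    have "(\<Sum>e\<in>in_edges (N2 q) t. B t s e *v y e) = (\<Sum>e\<in>in_edges (N2 q) t. B t s e *v yv q A K x e)"
      using yv_unique[OF y] by (auto simp: in_edges_def intro!: sum.cong)
    then show "(\<Sum>e\<in>in_edges (N2 q) t. B t s e *v y e) = x s" using a s by auto
  qed
qed

type_synonym 'a mat2 = "'a^2^2"

lemma mm_add_rdistrib: "((A::'a::semiring_1^'n^'m) + B) ** C = A ** C + B ** C"
  by (vector matrix_matrix_mult_def sum.distrib[symmetric] field_simps)

lemma mm_sum_left: "finite S \<Longrightarrow> (\<Sum>k\<in>S. (X k :: 'a::semiring_1^'n^'m)) ** C = (\<Sum>k\<in>S. X k ** C)"
  by (induction S rule: finite_induct) (auto simp: mm_add_rdistrib)

lemma mm_sum_right: "finite S \<Longrightarrow> (C :: 'a::semiring_1^'n^'m) ** (\<Sum>k\<in>S. X k) = (\<Sum>k\<in>S. C ** X k)"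
  by (induction S rule: finite_induct) (auto simp: matrix_add_ldistrib)

lemma mm_neg_left: "(- (A::'a::ring_1^'n^'m)) ** B = - (A ** B)"
  by (vector matrix_matrix_mult_def sum_negf)

lemma mm_neg_right: "(A::'a::ring_1^'n^'m) ** (- B) = - (A ** B)"
  by (vector matrix_matrix_mult_def sum_negf)

lemma inv_from_left: "(B::'a::field^'n^'n) ** A = mat 1 \<Longrightarrow> A ** B = mat 1"
  using matrix_left_right_inverse by blast

lemma char_alg:
  fixes Mq :: "nat \<Rightarrow> nat \<Rightarrow> 'a::field mat2" and MA MX U V W :: "nat \<Rightarrow> 'a mat2"
  assumes q2: "q \<ge> 2" and qn: "(of_nat q :: 'a) \<noteq> 0"
  and h1: "\<And>i j. i \<in> {2..q+2} \<Longrightarrow> j \<in> {2..q+2} \<Longrightarrow>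
        U i ** Mq i j + V i ** Mq (q+3) j = (if i = j then mat 1 else 0)"
  and h0: "\<And>i. i \<in> {2..q+2} \<Longrightarrow> Mq i i = 0"
  and h2: "\<And>j. j \<in> {2..q+2} \<Longrightarrow> (\<Sum>k\<in>{1..q+2}. W k ** Mq k j) = 0"
  and h3: "\<And>j. j \<in> {2..q+2} \<Longrightarrow> Mq 1 j = 0"
  and hA: "(\<Sum>k\<in>{1..q+2}. W k ** MA k) = mat 1"
  and hX: "(\<Sum>k\<in>{1..q+2}. W k ** MX k) = 0"
  shows "MX 1 = 0"
proof -
  define I where "I = {2..q+2}"
  define N where "N j = Mq (q+3) j" for j
  have fI: "finite I" unfolding I_def by simp
  have I1: "{1..q+2} = insert 1 I" "1 \<notin> I" unfolding I_def by auto
  have VN: "V i ** N i = mat 1" if "i \<in> I" for i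
    using h1[of i i] h0[of i] that unfolding I_def N_def by simp
  have NV: "N i ** V i = mat 1" if "i \<in> I" for i using VN[OF that] inv_from_left by blast
  have UMV: "U i ** Mq i j = - (V i ** N j)" if "i \<in> I" "j \<in> I" "i \<noteq> j" for i j
    using h1[of i j] that unfolding I_def N_def by (simp add: eq_neg_iff_add_eq_0)
  define Ui where "Ui i = (SOME R. U i ** R = mat 1)" for i
  have Uinv: "U i ** Ui i = mat 1" if "i \<in> I" for i
  proof -
    obtain j where j: "j \<in> I" "j \<noteq> i" 
    proof (cases "i = 2")
      case True then show ?thesis using that[of 3] q2 unfolding I_def by auto
    next
      case False then show ?thesis using that[of 2] q2 unfolding I_def by auto
    qed
    define R where "R = Mq i j ** (- (V j ** N i))"
    have "U i ** R = (U i ** Mq i j) ** (- (V j ** N i))"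
      unfolding R_def by (simp add: matrix_mul_assoc)
    also have "\<dots> = (V i ** N j) ** (V j ** N i)"
      using UMV[OF that j(1) j(2)[symmetric]] by (simp add: mm_neg_left mm_neg_right)
    also have "\<dots> = V i ** ((N j ** V j) ** N i)" by (simp add: matrix_mul_assoc)
    also have "\<dots> = mat 1" using NV[OF j(1)] VN[OF that] by simp
    finally have "U i ** R = mat 1" .
    then show ?thesis unfolding Ui_def by (rule someI)
  qed
  have Uinv2: "Ui i ** U i = mat 1" if "i \<in> I" for i using Uinv[OF that] inv_from_left by blast
  have Mform: "Mq i j = - (Ui i ** V i ** N j)" if "i \<in> I" "j \<in> I" "i \<noteq> j" for i j
  proof -
    have "Mq i j = (Ui i ** U i) ** Mq i j" using Uinv2[OF that(1)] by simp
    also have "\<dots> = Ui i ** (U i ** Mq i j)" by (simp add: matrix_mul_assoc)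
    also have "\<dots> = - (Ui i ** V i ** N j)" using UMV[OF that] by (simp add: mm_neg_right matrix_mul_assoc)
    finally show ?thesis .
  qed
  define Z where "Z k = W k ** Ui k ** V k" for k
  have Zsum: "(\<Sum>k\<in>I - {j}. Z k) = 0" if j: "j \<in> I" for j
  proof -
    have "0 = (\<Sum>k\<in>{1..q+2}. W k ** Mq k j)" using h2[of j] j unfolding I_def by simp
    also have "\<dots> = (\<Sum>k\<in>I. W k ** Mq k j)" using I1 fI h3[of j] j unfolding I_def by simp
    also have "\<dots> = (\<Sum>k\<in>I - {j}. W k ** Mq k j)"
      using sum.remove[OF fI j, of "\<lambda>k. W k ** Mq k j"] h0[of j] j unfolding I_def by simp
    also have "\<dots> = (\<Sum>k\<in>I - {j}. - (Z k ** N j))"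
      using Mform j unfolding Z_def by (auto intro!: sum.cong simp: mm_neg_right matrix_mul_assoc)
    also have "\<dots> = - ((\<Sum>k\<in>I - {j}. Z k) ** N j)"
      using fI by (simp add: mm_sum_left sum_negf)
    finally have "(\<Sum>k\<in>I - {j}. Z k) ** N j = 0" by simp
    then have "((\<Sum>k\<in>I - {j}. Z k) ** N j) ** V j = 0" by simp
    then show ?thesis using NV[OF j] by (simp add: matrix_mul_assoc[symmetric])
  qed
  define T where "T = (\<Sum>k\<in>I. Z k)"
  have ZT: "Z j = T" if j: "j \<in> I" for j
    using sum.remove[OF fI j, of Z] Zsum[OF j] unfolding T_def by simp
  have cI: "card I = q + 1" unfolding I_def by simp
  have T0: "T = 0"
  proof -
    have "(\<Sum>k\<in>I. Z k) = (\<Sum>k\<in>I. T)" using ZT by (intro sum.cong) auto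
    then have "T = (\<Sum>k\<in>I. T)" unfolding T_def by simp
    then have "T $ a $ b = (\<Sum>k\<in>I. T) $ a $ b" for a b by (rule arg_cong[where f="\<lambda>M. M $ a $ b"])
    also have "(\<Sum>k\<in>I. T) $ a $ b = (\<Sum>k\<in>I. T $ a $ b)" for a b by (simp only: sum_component)
    also have "(\<Sum>k\<in>I. T $ a $ b) = of_nat (q+1) * T $ a $ b" for a b using cI by simp
    finally have "T $ a $ b = of_nat (q+1) * T $ a $ b" for a b .
    then have "of_nat q * T $ a $ b = 0" for a b by (simp add: algebra_simps)
    then have "T $ a $ b = 0" for a b using qn by simp
    then show ?thesis by (simp add: vec_eq_iff)
  qed
  have W0: "W k = 0" if k: "k \<in> I" for k
  proof -
    have "W k = W k ** (Ui k ** U k)" using Uinv2[OF k] by simp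
    also have "\<dots> = W k ** (Ui k ** (V k ** N k) ** U k)" using VN[OF k] by simp
    also have "\<dots> = Z k ** (N k ** U k)" unfolding Z_def by (simp add: matrix_mul_assoc)
    also have "\<dots> = 0" using ZT[OF k] T0 by simp
    finally show ?thesis .
  qed
  have sp: "(\<Sum>k\<in>{1..q+2}. W k ** F k) = W 1 ** F 1" for F :: "nat \<Rightarrow> 'a mat2"
  proof -
    have "(\<Sum>k\<in>{1..q+2}. W k ** F k) = W 1 ** F 1 + (\<Sum>k\<in>I. W k ** F k)"
      unfolding I1(1) using sum.insert[OF fI I1(2)] by simp
    also have "(\<Sum>k\<in>I. W k ** F k) = 0" using W0 by (intro sum.neutral) simp
    finally show ?thesis by simp
  qed
  have "W 1 ** MA 1 = mat 1" using hA sp by simp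
  then have AW: "MA 1 ** W 1 = mat 1" using inv_from_left by blast
  have "W 1 ** MX 1 = 0" using hX sp by simp
  then have "(MA 1 ** W 1) ** MX 1 = 0" by (simp add: matrix_mul_assoc[symmetric])
  then show ?thesis using AW by simp
qed

definition umsg :: "node \<Rightarrow> 'a::zero \<Rightarrow> node \<Rightarrow> 'a" where
  "umsg s v = (\<lambda>n. if n = s then v else 0)"

lemma in_edges_pair: "in_edges N v = {(a, v) | a. (a, v) \<in> edges N}"
  unfolding in_edges_def by auto

lemma mv_sum_left: "finite S \<Longrightarrow> (\<Sum>k\<in>S. (M k :: 'a::semiring_1^'n^'m)) *v v = (\<Sum>k\<in>S. M k *v v)"
  by (induction S rule: finite_induct) (auto simp: matrix_vector_mult_add_rdistrib)

lemma sum_delta_edge: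
  assumes "finite E" "\<And>e. e \<in> E \<Longrightarrow> snd e = h" "\<And>e. e \<in> E \<Longrightarrow> fst e \<noteq> s \<Longrightarrow> f e = 0"
  shows "(\<Sum>e\<in>E. f e) = (if (s,h) \<in> E then f (s,h) else 0)"
proof (cases "(s,h) \<in> E")
  case True
  have "(\<Sum>e\<in>E. f e) = f (s,h) + (\<Sum>e\<in>E - {(s,h)}. f e)" using sum.remove[OF assms(1) True] .
  also have "(\<Sum>e\<in>E - {(s,h)}. f e) = 0"
    using assms(2,3) by (intro sum.neutral) (metis DiffE insertI1 prod.collapse)
  finally show ?thesis using True by simp
next
  case False
  then show ?thesis using assms(2,3) by (auto intro!: sum.neutral) (metis prod.collapse)
qed

lemma sum_two_edges:
  assumes "E = {e1, e2} \<union> X" "e1 \<noteq> e2" "e1 \<notin> X" "e2 \<notin> X" "finite X" "\<And>e. e \<in> X \<Longrightarrow> f e = 0"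
  shows "(\<Sum>e\<in>E. f e) = f e1 + f e2"
proof -
  have "(\<Sum>e\<in>E. f e) = f e1 + f e2 + (\<Sum>e\<in>X. f e)" using assms(1-5) by (simp add: sum.union_disjoint add_ac)
  then show ?thesis using assms(6) by simp
qed

definition Mq :: "nat \<Rightarrow> (node \<times> node \<Rightarrow> 'a::field^'d^'d) \<Rightarrow> (node \<times> node \<Rightarrow> node \<times> node \<Rightarrow> 'a^'d^'d)
   \<Rightarrow> nat \<Rightarrow> node \<Rightarrow> 'a^'d^'d" where
  "Mq q A K k s = (if (s, Mn k) \<in> edges (N2 q) then K (s, Mn k) (Mn k, Nn k) ** A (s, Mn k) else 0)"

lemma Mn_not_src: "Mn k \<notin> srcs (N2 q)" "mid1 (Mn k)" "Nn k \<notin> srcs (N2 q)" "\<not> mid1 (Nn k)"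
  "Ub k \<notin> srcs (N2 q)" "mid1 (Ub k)" "Vn k \<notin> srcs (N2 q)" "\<not> mid1 (Vn k)"
  by (auto simp: N2_def N2_srcs_def mid1_def)

lemma yv_src: "s \<in> srcs (N2 q) \<Longrightarrow> yv q A K x (s, h) = A (s, h) *v x s"
  by (simp add: yv_def y1_def)

lemma yv_Mn: "yv q A K x (Mn k, h) = (\<Sum>e'\<in>in_edges (N2 q) (Mn k). K e' (Mn k, h) *v (A e' *v x (fst e')))"
  by (simp add: yv_def y2_def y1_def Mn_not_src)

lemma yv_Ub: "yv q A K x (Ub k, h) = (\<Sum>e'\<in>in_edges (N2 q) (Ub k). K e' (Ub k, h) *v (A e' *v x (fst e')))"
  by (simp add: yv_def y2_def y1_def Mn_not_src)

lemma in_Mn_src: "e \<in> in_edges (N2 q) (Mn k) \<Longrightarrow> fst e \<in> srcs (N2 q)"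
  using edge_mid1[of e q] by (auto simp: in_edges_def mid1_def)

lemma in_Ub_src: "e \<in> in_edges (N2 q) (Ub k) \<Longrightarrow> fst e \<in> srcs (N2 q)"
  using edge_mid1[of e q] by (auto simp: in_edges_def mid1_def)

lemma yv_Mn_unit: "yv q A K (umsg s v) (Mn k, Nn k) = Mq q A K k s *v v"
proof -
  have "yv q A K (umsg s v) (Mn k, Nn k) =
     (\<Sum>e'\<in>in_edges (N2 q) (Mn k). K e' (Mn k, Nn k) *v (A e' *v umsg s v (fst e')))"
    by (rule yv_Mn)
  also have "\<dots> = (if (s, Mn k) \<in> in_edges (N2 q) (Mn k) then K (s, Mn k) (Mn k, Nn k) *v (A (s, Mn k) *v umsg s v (fst (s, Mn k))) else 0)"
    by (rule sum_delta_edge[where f="\<lambda>e'. K e' (Mn k, Nn k) *v (A e' *v umsg s v (fst e'))"])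
       (auto simp: finite_in_edges[unfolded in_edges_def] in_edges_def umsg_def)
  also have "\<dots> = Mq q A K k s *v v"
    by (simp add: Mq_def in_edges_def matrix_vector_mul_assoc umsg_def)
  finally show ?thesis .
qed

lemma mem_edges_Nn: "(a, Nn k) \<in> edges (N2 q) \<longleftrightarrow> a = Mn k \<and> 1 \<le> k \<and> k \<le> q + 3"
  unfolding N2_def char_edges_def M3_edges_def extra_edges_def G1_def G2_def G3_def by simp

lemma in_Nn: "1 \<le> k \<Longrightarrow> k \<le> q + 3 \<Longrightarrow> in_edges (N2 q) (Nn k) = {(Mn k, Nn k)}"
  unfolding in_edges_pair mem_edges_Nn by auto

lemma yv_Nn: "1 \<le> k \<Longrightarrow> k \<le> q + 3 \<Longrightarrow>
    yv q A K x (Nn k, h) = K (Mn k, Nn k) (Nn k, h) *v yv q A K x (Mn k, Nn k)"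
  using in_Nn[of k q] by (simp add: yv_def y3_def y2_def Mn_not_src mid_not_src)

lemma mem_edges_Rho: "((a, Rho i) \<in> edges (N2 q)) \<longleftrightarrow>
   ((a = Nn i \<or> a = Nn (q+3)) \<and> 1 \<le> i \<and> i \<le> q+2) \<or> (i = q+3 \<and> (\<exists>k. a = Nn k \<and> 1 \<le> k \<and> k \<le> q+2))
   \<or> (i = 1 \<and> (\<exists>k. a = XB k \<and> 2 \<le> k \<and> k \<le> q+1)) \<or> (a = SA \<and> i = q+2) \<or> (a = SX \<and> (i = 2 \<or> i = 3))"
  unfolding N2_def char_edges_def M3_edges_def extra_edges_def
  by simp blast

lemma in_Rho_mid: "2 \<le> i \<Longrightarrow> i \<le> q + 1 \<Longrightarrow>
   in_edges (N2 q) (Rho i) = {(Nn i, Rho i), (Nn (q+3), Rho i)} \<union> (if i \<le> 3 then {(SX, Rho i)} else {})"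
  unfolding in_edges_pair mem_edges_Rho by auto

lemma in_Rho_q2: "2 \<le> q \<Longrightarrow>
   in_edges (N2 q) (Rho (q+2)) = {(Nn (q+2), Rho (q+2)), (Nn (q+3), Rho (q+2))} \<union> {(SA, Rho (q+2))}"
  unfolding in_edges_pair mem_edges_Rho by auto

lemma in_Rho_q3: "2 \<le> q \<Longrightarrow>
   in_edges (N2 q) (Rho (q+3)) = (\<lambda>k. (Nn k, Rho (q+3))) ` {1..q+2}"
  unfolding in_edges_pair mem_edges_Rho by auto

lemma mem_edges_Mn: "(a, Mn k) \<in> edges (N2 q) \<longleftrightarrow>
   (a = SA \<and> ((1 \<le> k \<and> k \<le> q+1) \<or> k = q+3)) \<or> (a = SX \<and> (k = 1 \<or> (4 \<le> k \<and> k \<le> q+3)))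
   \<or> (\<exists>i. a = XB i \<and> 2 \<le> i \<and> i \<le> q+2 \<and> ((2 \<le> k \<and> k \<le> q+2 \<and> i \<noteq> k) \<or> k = q+3))"
  unfolding N2_def char_edges_def M3_edges_def extra_edges_def G1_def G2_def G3_def by simp blast

lemma dem_Rho: "2 \<le> i \<Longrightarrow> i \<le> q+2 \<Longrightarrow> demands (N2 q) (Rho i) = {XB i}"
  "demands (N2 q) (Rho (q+3)) = {SA}"
  by (auto simp: N2_def N2_demands_def)

lemma SA_SX_src: "SA \<in> srcs (N2 q)" "SX \<in> srcs (N2 q)"
  by (auto simp: N2_def N2_srcs_def)

lemma dec_Rho_i:
  assumes q2: "2 \<le> q" and i: "2 \<le> i" "i \<le> q+2" and x0: "x SX = 0" "x SA = 0"
  shows "(\<Sum>e\<in>in_edges (N2 q) (Rho i). C e *v yv q A K x e) =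
     C (Nn i, Rho i) *v yv q A K x (Nn i, Rho i) + C (Nn (q+3), Rho i) *v yv q A K x (Nn (q+3), Rho i)"
proof (cases "i \<le> q + 1")
  case True
  show ?thesis
    by (rule sum_two_edges[OF in_Rho_mid[OF i(1) True]]) (use i x0 in \<open>auto simp: yv_src SA_SX_src split: if_splits\<close>)
next
  case False
  then have iq: "i = q + 2" using i by simp
  show ?thesis unfolding iq
    by (rule sum_two_edges[OF in_Rho_q2[OF q2]]) (use x0 in \<open>auto simp: yv_src SA_SX_src\<close>)
qed

lemma dec_Rho_q3:
  assumes q2: "2 \<le> q"
  shows "(\<Sum>e\<in>in_edges (N2 q) (Rho (q+3)). C e *v yv q A K x e) =
     (\<Sum>k\<in>{1..q+2}. C (Nn k, Rho (q+3)) *v yv q A K x (Nn k, Rho (q+3)))"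
  unfolding in_Rho_q3[OF q2] by (subst sum.reindex) (auto simp: inj_on_def)

lemma char_only_if:
  fixes A :: "node \<times> node \<Rightarrow> 'a::field^2^2"
  assumes q2: "2 \<le> q" and qn: "(of_nat q :: 'a) \<noteq> 0" and sol: "is_vlnc_solution (N2 q) A K B"
  shows "Mq q A K 1 SX = 0"
proof -
  have dec: "\<And>x t s. s \<in> demands (N2 q) t \<Longrightarrow>
      (\<Sum>e\<in>in_edges (N2 q) t. B t s e *v yv q A K x e) = x s"
    using sol unfolding sol_iff by blast
  define U where "U i = B (Rho i) (XB i) (Nn i, Rho i) ** K (Mn i, Nn i) (Nn i, Rho i)" for i
  define V where "V i = B (Rho i) (XB i) (Nn (q+3), Rho i) ** K (Mn (q+3), Nn (q+3)) (Nn (q+3), Rho i)" for i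
  define W where "W k = B (Rho (q+3)) SA (Nn k, Rho (q+3)) ** K (Mn k, Nn k) (Nn k, Rho (q+3))" for k
  define M where "M k j = Mq q A K k (XB j)" for k j
  show ?thesis
  proof (rule char_alg[where Mq = M and U = U and V = V and W = W and MA = "\<lambda>k. Mq q A K k SA"
        and MX = "\<lambda>k. Mq q A K k SX", OF q2 qn])
    fix i j assume i: "i \<in> {2..q+2}" and j: "j \<in> {2..q+2}"
    show "U i ** M i j + V i ** M (q + 3) j = (if i = j then mat 1 else 0)"
    proof (subst matrix_eq, intro allI)
      fix v :: "'a^2"
      let ?x = "umsg (XB j) v"
      have "?x (XB i) = (\<Sum>e\<in>in_edges (N2 q) (Rho i). B (Rho i) (XB i) e *v yv q A K ?x e)"
        using dec[of "XB i" "Rho i" ?x] dem_Rho(1)[of i q] i by simp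
      also have "\<dots> = B (Rho i) (XB i) (Nn i, Rho i) *v yv q A K ?x (Nn i, Rho i) +
          B (Rho i) (XB i) (Nn (q+3), Rho i) *v yv q A K ?x (Nn (q+3), Rho i)"
        by (rule dec_Rho_i) (use q2 i in \<open>auto simp: umsg_def\<close>)
      also have "\<dots> = (U i ** M i j + V i ** M (q + 3) j) *v v"
        using i by (simp add: yv_Nn yv_Mn_unit U_def V_def M_def matrix_vector_mul_assoc
            matrix_vector_mult_add_rdistrib matrix_mul_assoc)
      finally show "(U i ** M i j + V i ** M (q + 3) j) *v v = (if i = j then mat 1 else 0) *v v"
        by (auto simp: umsg_def split: if_splits)
    qed
  next
    fix i assume "i \<in> {2..q+2}"
    then show "M i i = 0" by (auto simp: M_def Mq_def mem_edges_Mn)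
  next
    fix j assume j: "j \<in> {2..q+2}"
    show "M 1 j = 0" by (auto simp: M_def Mq_def mem_edges_Mn)
  next
    have key: "(\<Sum>k\<in>{1..q+2}. W k ** Mq q A K k s) = (if s = SA then mat 1 else 0)" for s
    proof (subst matrix_eq, intro allI)
      fix v :: "'a^2"
      let ?x = "umsg s v"
      have "?x SA = (\<Sum>e\<in>in_edges (N2 q) (Rho (q+3)). B (Rho (q+3)) SA e *v yv q A K ?x e)"
        using dec[of SA "Rho (q+3)" ?x] dem_Rho(2)[of q] by simp
      also have "\<dots> = (\<Sum>k\<in>{1..q+2}. B (Rho (q+3)) SA (Nn k, Rho (q+3)) *v yv q A K ?x (Nn k, Rho (q+3)))"
        by (rule dec_Rho_q3[OF q2])
      also have "\<dots> = (\<Sum>k\<in>{1..q+2}. (W k ** Mq q A K k s) *v v)"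
        by (intro sum.cong) (auto simp: yv_Nn yv_Mn_unit W_def matrix_vector_mul_assoc matrix_mul_assoc)
      also have "\<dots> = (\<Sum>k\<in>{1..q+2}. W k ** Mq q A K k s) *v v"
        by (rule mv_sum_left[symmetric]) simp
      finally show "(\<Sum>k\<in>{1..q+2}. W k ** Mq q A K k s) *v v = (if s = SA then mat 1 else 0) *v v"
        by (simp only: umsg_def) (auto split: if_splits)
    qed
    show "\<And>j. j \<in> {2..q+2} \<Longrightarrow> (\<Sum>k\<in>{1..q+2}. W k ** M k j) = 0"
      using key unfolding M_def by simp
    show "(\<Sum>k\<in>{1..q+2}. W k ** Mq q A K k SA) = mat 1" using key by simp
    show "(\<Sum>k\<in>{1..q+2}. W k ** Mq q A K k SX) = 0" using key by simp
  qed
qed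

lemma card_kernel_bound:
  fixes f :: "'b::{finite,ab_group_add} \<Rightarrow> 'c::ab_group_add"
  assumes add: "\<And>x y. f (x + y) = f x + f y"
  shows "card (UNIV :: 'b set) \<le> card (range f) * card {x. f x = 0}"
proof -
  have minus: "f (x - y) = f x - f y" for x y
    using add[of "x - y" y] by (simp add: algebra_simps)
  have fib: "card (f -` {c}) = card {x. f x = 0}" if "c \<in> range f" for c
  proof -
    obtain x0 where c: "c = f x0" using \<open>c \<in> range f\<close> by auto
    have "f -` {c} = (\<lambda>k. k + x0) ` {x. f x = 0}"
    proof (rule set_eqI, rule iffI)
      fix y assume "y \<in> f -` {c}"
      then have "f (y - x0) = 0" using c minus by simp
      then show "y \<in> (\<lambda>k. k + x0) ` {x. f x = 0}" by (auto intro!: image_eqI[of _ _ "y - x0"])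
    next
      fix y assume "y \<in> (\<lambda>k. k + x0) ` {x. f x = 0}"
      then show "y \<in> f -` {c}" using c add by auto
    qed
    moreover have "inj_on (\<lambda>k. k + x0) {x. f x = 0}" by (auto simp: inj_on_def)
    ultimately show ?thesis by (simp add: card_image)
  qed
  have "UNIV = (\<Union>c\<in>range f. f -` {c})" by auto
  then have "card (UNIV :: 'b set) \<le> (\<Sum>c\<in>range f. card (f -` {c}))"
    using card_UN_le[of "range f" "\<lambda>c. f -` {c}"] by simp
  also have "\<dots> = (\<Sum>c\<in>range f. card {x. f x = 0})" using fib by (intro sum.cong) auto
  also have "\<dots> = card (range f) * card {x. f x = 0}" by simp
  finally show ?thesis .
qed

lemma mv_scale: "(A :: 'a::comm_ring_1^'n^'m) *v (c *s x) = c *s (A *v x)"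
  by (simp add: vec_eq_iff matrix_vector_mult_def sum_distrib_left mult_ac)

lemma card_subspace2:
  fixes S :: "('a::{finite,field}^2) set"
  assumes z: "0 \<in> S" and ad: "\<And>u v. u \<in> S \<Longrightarrow> v \<in> S \<Longrightarrow> u + v \<in> S"
    and sc: "\<And>c u. u \<in> S \<Longrightarrow> c *s u \<in> S"
  shows "\<exists>e\<le>2. card S = CARD('a) ^ e"
proof (cases "S = {0}")
  case True then show ?thesis by (intro exI[of _ 0]) simp
next
  case False
  then obtain v where v: "v \<in> S" "v \<noteq> 0" using z by auto
  show ?thesis
  proof (cases "S \<subseteq> range (\<lambda>c. c *s v)")
    case True
    have "S = range (\<lambda>c. c *s v)" using True sc v by auto
    moreover have "inj (\<lambda>c::'a. c *s v)"
    proof (rule injI)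
      fix a b :: 'a assume "a *s v = b *s v"
      then have "(a - b) *s v = 0" by (simp add: vector_sadd_rdistrib vec_eq_iff algebra_simps)
      then show "a = b" using v(2) by (auto simp: vec_eq_iff)
    qed
    ultimately have "card S = CARD('a)" by (simp add: card_image)
    then show ?thesis by (intro exI[of _ 1]) simp
  next
    case False
    then obtain w where w: "w \<in> S" "w \<notin> range (\<lambda>c. c *s v)" by auto
    define d where "d = v$1 * w$2 - v$2 * w$1"
    have d0: "d \<noteq> 0"
    proof
      assume d: "d = 0"
      show False
      proof (cases "v$1 = 0")
        case True
        then have "v$2 \<noteq> 0" using v(2) by (auto simp: vec_eq_iff forall_2)
        then have "w$1 = 0" using d True unfolding d_def by simp
        then have "w = (w$2 / v$2) *s v" using True \<open>v$2 \<noteq> 0\<close> by (auto simp: vec_eq_iff forall_2)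
        then show False using w(2) by blast
      next
        case False
        have "w$2 = (w$1 / v$1) * v$2" using d False unfolding d_def
          by (simp add: divide_simps) (simp add: algebra_simps)
        then have "w = (w$1 / v$1) *s v" using False
          by (simp add: vec_eq_iff forall_2)
        then show False using w(2) by blast
      qed
    qed
    have "S = UNIV"
    proof (rule set_eqI, rule iffI)
      fix u :: "'a^2" assume "u \<in> UNIV"
      define a where "a = (u$1 * w$2 - u$2 * w$1) / d"
      define b where "b = (v$1 * u$2 - v$2 * u$1) / d"
      have e1: "a * v$1 + b * w$1 = u$1" unfolding a_def b_def using d0
        by (simp add: divide_simps) (simp add: d_def algebra_simps)
      have e2: "a * v$2 + b * w$2 = u$2" unfolding a_def b_def using d0
        by (simp add: divide_simps) (simp add: d_def algebra_simps)
      have "u = a *s v + b *s w"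
        using e1 e2 by (simp add: vec_eq_iff forall_2)
      then show "u \<in> S" using ad sc v(1) w(1) by metis
    qed simp
    then show ?thesis by (intro exI[of _ 2]) simp
  qed
qed

type_synonym 'a gv = "('a^2) \<times> ('a^2) \<times> ('a^2)"

definition gnode :: "nat \<Rightarrow> nat \<Rightarrow> node" where
  "gnode i k = (if i = 1 then (if k = 0 then SA else if k = 1 then SB else SC)
     else if i = 2 then (if k = 0 then SR else if k = 1 then SS else SW)
     else (if k = 0 then SX else if k = 1 then SY else SZ))"

definition proj :: "nat \<Rightarrow> 'a gv \<Rightarrow> 'a^2" where
  "proj k X = (if k = 0 then fst X else if k = 1 then fst (snd X) else snd (snd X))"

definition msg3 :: "'a::zero gv \<Rightarrow> 'a gv \<Rightarrow> 'a gv \<Rightarrow> node \<Rightarrow> 'a^2" where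
  "msg3 X1 X2 X3 n = (case n of SA \<Rightarrow> proj 0 X1 | SB \<Rightarrow> proj 1 X1 | SC \<Rightarrow> proj 2 X1
     | SR \<Rightarrow> proj 0 X2 | SS \<Rightarrow> proj 1 X2 | SW \<Rightarrow> proj 2 X2
     | SX \<Rightarrow> proj 0 X3 | SY \<Rightarrow> proj 1 X3 | SZ \<Rightarrow> proj 2 X3 | _ \<Rightarrow> 0)"

definition phi :: "(node \<times> node \<Rightarrow> 'a::field^2^2) \<Rightarrow> (node \<times> node \<Rightarrow> node \<times> node \<Rightarrow> 'a^2^2)
   \<Rightarrow> nat \<Rightarrow> node \<Rightarrow> 'a gv \<Rightarrow> 'a^2" where
  "phi A K i h X = K (gnode i 0, Ub i) (Ub i, h) *v (A (gnode i 0, Ub i) *v proj 0 X)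
     + K (gnode i 1, Ub i) (Ub i, h) *v (A (gnode i 1, Ub i) *v proj 1 X)
     + K (gnode i 2, Ub i) (Ub i, h) *v (A (gnode i 2, Ub i) *v proj 2 X)"

definition kerg :: "(node \<times> node \<Rightarrow> 'a::field^2^2) \<Rightarrow> (node \<times> node \<Rightarrow> node \<times> node \<Rightarrow> 'a^2^2)
   \<Rightarrow> nat \<Rightarrow> 'a gv set" where
  "kerg A K i = {X. phi A K i (Vn i) X = 0}"

lemma mem_edges_Ub: "(a, Ub i) \<in> edges (N2 q) \<longleftrightarrow>
   (i = 1 \<and> (a = SA \<or> a = SB \<or> a = SC)) \<or> (i = 2 \<and> (a = SR \<or> a = SS \<or> a = SW))
   \<or> (i = 3 \<and> (a = SX \<or> a = SY \<or> a = SZ))"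
  unfolding N2_def char_edges_def M3_edges_def extra_edges_def G1_def G2_def G3_def by auto

lemma mem_edges_Vn: "(a, Vn i) \<in> edges (N2 q) \<longleftrightarrow>
   (\<exists>k. a = Ub k \<and> 1 \<le> k \<and> k \<le> 3 \<and> (k = i \<or> i = 4 \<or> i = 5))"
  unfolding N2_def char_edges_def M3_edges_def extra_edges_def G1_def G2_def G3_def by auto

lemma mem_edges_Tn: "(a, Tn j) \<in> edges (N2 q) \<longleftrightarrow>
   ((\<exists>i. a = Vn i \<and> 1 \<le> i \<and> i \<le> 5) \<and> 1 \<le> j \<and> j \<le> 27) \<or> (a = SW \<and> j \<in> {7,8,9,16,17,18})
   \<or> (a = SC \<and> 19 \<le> j \<and> j \<le> 24) \<or> (a = SA \<and> j = 25) \<or> (a = SY \<and> j = 26) \<or> (a = Nn 1 \<and> j = 25)"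
  unfolding N2_def char_edges_def M3_edges_def extra_edges_def G1_def G2_def G3_def by auto

lemma gnode_simps: "gnode 1 0 = SA" "gnode 1 1 = SB" "gnode 1 2 = SC"
  "gnode 2 0 = SR" "gnode 2 1 = SS" "gnode 2 2 = SW"
  "gnode 3 0 = SX" "gnode 3 1 = SY" "gnode 3 2 = SZ"
  by (simp_all add: gnode_def)

lemma in_Ub: "i \<in> {1,2,3} \<Longrightarrow>
   in_edges (N2 q) (Ub i) = {(gnode i 0, Ub i), (gnode i 1, Ub i), (gnode i 2, Ub i)}"
  unfolding in_edges_pair mem_edges_Ub by (auto simp: gnode_def)

lemma gnode_distinct: "i \<in> {1,2,3} \<Longrightarrow> gnode i 0 \<noteq> gnode i 1 \<and> gnode i 0 \<noteq> gnode i 2 \<and> gnode i 1 \<noteq> gnode i 2"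
  by (auto simp: gnode_def)

lemma yv_Ub_phi: "i \<in> {1,2,3} \<Longrightarrow>
   yv q A K x (Ub i, h) = phi A K i h (x (gnode i 0), x (gnode i 1), x (gnode i 2))"
  using gnode_distinct[of i] by (simp add: yv_Ub in_Ub phi_def add.assoc proj_def)

lemma in_Vn: "i \<in> {1,2,3} \<Longrightarrow> in_edges (N2 q) (Vn i) = {(Ub i, Vn i)}"
  unfolding in_edges_pair mem_edges_Vn by auto

lemma yv_Vn: "i \<in> {1,2,3} \<Longrightarrow>
    yv q A K x (Vn i, h) = K (Ub i, Vn i) (Vn i, h) *v yv q A K x (Ub i, Vn i)"
  using in_Vn[of i q] by (simp add: yv_def y3_def y2_def Mn_not_src mid_not_src)

lemma msg3_gnode: "k < 3 \<Longrightarrow> msg3 X1 X2 X3 (gnode 1 k) = proj k X1"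
  "k < 3 \<Longrightarrow> msg3 X1 X2 X3 (gnode 2 k) = proj k X2"
  "k < 3 \<Longrightarrow> msg3 X1 X2 X3 (gnode 3 k) = proj k X3"
  by (auto simp: msg3_def gnode_def proj_def numeral_3_eq_3 less_Suc_eq)

lemma msg3_g1: "k < 3 \<Longrightarrow> msg3 X1 X2 X3 (gnode (Suc 0) k) = proj k X1"
  by (auto simp: msg3_def gnode_def proj_def numeral_3_eq_3 less_Suc_eq)

lemma phi_msg3: "phi A K 1 h (msg3 X1 X2 X3 (gnode 1 0), msg3 X1 X2 X3 (gnode 1 1), msg3 X1 X2 X3 (gnode 1 2)) = phi A K 1 h X1"
  "phi A K 2 h (msg3 X1 X2 X3 (gnode 2 0), msg3 X1 X2 X3 (gnode 2 1), msg3 X1 X2 X3 (gnode 2 2)) = phi A K 2 h X2"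
  "phi A K 3 h (msg3 X1 X2 X3 (gnode 3 0), msg3 X1 X2 X3 (gnode 3 1), msg3 X1 X2 X3 (gnode 3 2)) = phi A K 3 h X3"
  by (simp_all add: msg3_def gnode_def phi_def proj_def)


lemma sum_1_5: "(\<Sum>i\<in>{1..5::nat}. f i) = f 1 + f 2 + f 3 + f 4 + f 5"
proof -
  have "{1..5::nat} = {1,2,3,4,5}" by auto
  then show ?thesis by (simp add: add_ac)
qed

lemma Vn_zero:
  assumes "i \<in> {1,2,3}" "X \<in> kerg A K i"
  shows "phi A K i (Vn i) X = 0"
  using assms unfolding kerg_def by simp

lemma term_bound:
  fixes A :: "node \<times> node \<Rightarrow> 'a::{finite,field}^2^2"
  assumes dec: "\<And>x s. s \<in> demands (N2 q) (Tn j) \<Longrightarrow>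
      (\<Sum>e\<in>in_edges (N2 q) (Tn j). B (Tn j) s e *v yv q A K x e) = x s"
  and k: "k1 < 3" "k2 < 3" "k3 < 3"
  and dm: "gnode 1 k1 \<in> demands (N2 q) (Tn j)" "gnode 2 k2 \<in> demands (N2 q) (Tn j)"
     "gnode 3 k3 \<in> demands (N2 q) (Tn j)"
  and ie: "in_edges (N2 q) (Tn j) = (\<lambda>i. (Vn i, Tn j)) ` {1..5} \<union> Xe"
  and fin: "finite Xe" and dis: "\<And>i. (Vn i, Tn j) \<notin> Xe"
  and S: "S1 \<subseteq> kerg A K 1" "S2 \<subseteq> kerg A K 2" "S3 \<subseteq> kerg A K 3"
  and ex0: "\<And>X1 X2 X3 e. X1 \<in> S1 \<Longrightarrow> X2 \<in> S2 \<Longrightarrow> X3 \<in> S3 \<Longrightarrow> e \<in> Xe \<Longrightarrow>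
      yv q A K (msg3 X1 X2 X3) e = 0"
  shows "card (proj k1 ` S1 \<times> proj k2 ` S2 \<times> proj k3 ` S3) \<le> CARD('a)^4"
proof -
  define Bo where "Bo s a b = B (Tn j) s (Vn 4, Tn j) *v a + B (Tn j) s (Vn 5, Tn j) *v b" for s a b
  define F where "F = (\<lambda>(a,b). (Bo (gnode 1 k1) a b, Bo (gnode 2 k2) a b, Bo (gnode 3 k3) a b))"
  have key: "msg3 X1 X2 X3 s = Bo s (yv q A K (msg3 X1 X2 X3) (Vn 4, Tn j)) (yv q A K (msg3 X1 X2 X3) (Vn 5, Tn j))"
    if X: "X1 \<in> S1" "X2 \<in> S2" "X3 \<in> S3" and s: "s \<in> demands (N2 q) (Tn j)" for X1 X2 X3 s
  proof -
    let ?x = "msg3 X1 X2 X3"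
    let ?f = "\<lambda>e. B (Tn j) s e *v yv q A K ?x e"
    have "?x s = (\<Sum>e\<in>in_edges (N2 q) (Tn j). ?f e)" using dec[OF s] by simp
    also have "\<dots> = (\<Sum>e\<in>(\<lambda>i. (Vn i, Tn j)) ` {1..5}. ?f e) + (\<Sum>e\<in>Xe. ?f e)"
      unfolding ie by (rule sum.union_disjoint) (use fin dis in auto)
    also have "(\<Sum>e\<in>Xe. ?f e) = 0" using ex0[OF X] by (intro sum.neutral) simp
    also have "(\<Sum>e\<in>(\<lambda>i. (Vn i, Tn j)) ` {1..5}. ?f e) = (\<Sum>i\<in>{1..5}. ?f (Vn i, Tn j))"
      by (subst sum.reindex) (auto simp: inj_on_def)
    also have "\<dots> = ?f (Vn 1, Tn j) + ?f (Vn 2, Tn j) + ?f (Vn 3, Tn j) + ?f (Vn 4, Tn j) + ?f (Vn 5, Tn j)"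
      by (rule sum_1_5)
    also have "?f (Vn 1, Tn j) = 0"
      using Vn_zero[of 1 X1 A K] S X phi_msg3(1)[of A K "Vn 1" X1 X2 X3] by (auto simp: yv_Vn yv_Ub_phi)
    also have "?f (Vn 2, Tn j) = 0"
      using Vn_zero[of 2 X2 A K] S X phi_msg3(2)[of A K "Vn 2" X1 X2 X3] by (auto simp: yv_Vn yv_Ub_phi)
    also have "?f (Vn 3, Tn j) = 0"
      using Vn_zero[of 3 X3 A K] S X phi_msg3(3)[of A K "Vn 3" X1 X2 X3] by (auto simp: yv_Vn yv_Ub_phi)
    finally show ?thesis unfolding Bo_def by simp
  qed
  have sub: "proj k1 ` S1 \<times> proj k2 ` S2 \<times> proj k3 ` S3 \<subseteq> range F"
  proof
    fix p assume "p \<in> proj k1 ` S1 \<times> proj k2 ` S2 \<times> proj k3 ` S3"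
    then obtain X1 X2 X3 where X: "X1 \<in> S1" "X2 \<in> S2" "X3 \<in> S3"
      and p: "p = (proj k1 X1, proj k2 X2, proj k3 X3)" by auto
    let ?x = "msg3 X1 X2 X3"
    have e1: "proj k1 X1 = Bo (gnode 1 k1) (yv q A K ?x (Vn 4, Tn j)) (yv q A K ?x (Vn 5, Tn j))"
      using key[OF X dm(1)] unfolding msg3_gnode(1)[OF k(1)] .
    have e2: "proj k2 X2 = Bo (gnode 2 k2) (yv q A K ?x (Vn 4, Tn j)) (yv q A K ?x (Vn 5, Tn j))"
      using key[OF X dm(2)] unfolding msg3_gnode(2)[OF k(2)] .
    have e3: "proj k3 X3 = Bo (gnode 3 k3) (yv q A K ?x (Vn 4, Tn j)) (yv q A K ?x (Vn 5, Tn j))"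
      using key[OF X dm(3)] unfolding msg3_gnode(3)[OF k(3)] .
    have "p = F (yv q A K ?x (Vn 4, Tn j), yv q A K ?x (Vn 5, Tn j))"
      unfolding p F_def using e1 e2 e3 by simp
    then show "p \<in> range F" by blast
  qed
  have "card (proj k1 ` S1 \<times> proj k2 ` S2 \<times> proj k3 ` S3) \<le> card (range F)"
    by (rule card_mono[OF _ sub]) simp
  also have "\<dots> \<le> card (UNIV :: (('a^2) \<times> ('a^2)) set)" by (rule card_image_le) simp
  also have "\<dots> = CARD('a)^4" by (simp add: UNIV_Times_UNIV[symmetric] card_cartesian_product del: UNIV_Times_UNIV)
  finally show ?thesis .
qed

lemma proj_add: "proj k (X + Y) = proj k X + proj k Y"
  by (simp add: proj_def)

lemma proj_zero: "proj k 0 = 0"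
  by (simp add: proj_def)

definition gsc :: "'a::comm_ring_1 \<Rightarrow> 'a gv \<Rightarrow> 'a gv" where
  "gsc c X = (c *s fst X, c *s fst (snd X), c *s snd (snd X))"

lemma proj_gsc: "proj k (gsc c X) = c *s proj k X"
  by (simp add: proj_def gsc_def)

lemma phi_add: "phi A K i h (X + Y) = phi A K i h X + phi A K i h Y"
  by (simp add: phi_def proj_add matrix_vector_right_distrib add_ac)

lemma phi_zero: "phi A K i h 0 = 0"
  by (simp add: phi_def proj_zero)

lemma phi_gsc: "phi A K i h (gsc c X) = c *s phi A K i h X"
  by (simp add: phi_def proj_gsc mv_scale vector_add_ldistrib)

lemma card_field_ge2: "2 \<le> CARD('a::{finite,field})"
proof -
  have "{0, 1::'a} \<subseteq> UNIV" by simp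
  then have "card {0, 1::'a} \<le> CARD('a)" by (rule card_mono[OF finite])
  then show ?thesis by simp
qed

lemma card_gv: "CARD('a::{finite,field} gv) = CARD('a)^6"
  by (simp add: UNIV_Times_UNIV[symmetric] card_cartesian_product del: UNIV_Times_UNIV)

lemma card_v2: "CARD('a::{finite,field}^2) = CARD('a)^2"
  by simp

lemma card_kerg: "CARD('a::{finite,field})^4 \<le> card (kerg (A :: node \<times> node \<Rightarrow> 'a^2^2) K i)"
proof -
  let ?f = "phi A K i (Vn i)"
  have a: "CARD('a gv) \<le> card (range ?f) * card {x. ?f x = 0}"
    using card_kernel_bound[of ?f, OF phi_add] .
  have b: "card (range ?f) \<le> CARD('a^2)" by (rule card_mono) auto
  have "CARD('a gv) \<le> CARD('a^2) * card {x. ?f x = 0}"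
    by (rule order_trans[OF a mult_le_mono1[OF b]])
  then have ineq: "CARD('a)^6 \<le> CARD('a)^2 * card (kerg A K i)"
    unfolding card_gv card_v2 kerg_def .
  have eq: "CARD('a)^6 = CARD('a)^2 * CARD('a)^4" using power_add[of "CARD('a)" 2 4] by simp
  have "CARD('a)^2 * CARD('a)^4 \<le> CARD('a)^2 * card (kerg A K i)" using ineq unfolding eq .
  moreover have "0 < CARD('a)^2" using card_field_ge2[where 'a='a] by simp
  ultimately show ?thesis by (metis nat_mult_le_cancel1)
qed

lemma sg_exp: "\<exists>e\<le>2. card (proj k ` kerg (A :: node \<times> node \<Rightarrow> 'a::{finite,field}^2^2) K i) = CARD('a)^e"
proof (rule card_subspace2)
  show "0 \<in> proj k ` kerg A K i"
    by (rule image_eqI[of _ _ 0]) (auto simp: proj_zero kerg_def phi_zero)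
next
  fix u v assume "u \<in> proj k ` kerg A K i" "v \<in> proj k ` kerg A K i"
  then obtain X Y where "X \<in> kerg A K i" "Y \<in> kerg A K i" "u = proj k X" "v = proj k Y" by auto
  then show "u + v \<in> proj k ` kerg A K i"
    by (intro image_eqI[of _ _ "X + Y"]) (auto simp: kerg_def phi_add proj_add)
next
  fix c u assume "u \<in> proj k ` kerg A K i"
  then obtain X where "X \<in> kerg A K i" "u = proj k X" by auto
  then show "c *s u \<in> proj k ` kerg A K i"
    by (intro image_eqI[of _ _ "gsc c X"]) (auto simp: kerg_def phi_gsc proj_gsc)
qed

lemma kerg_sub: "kerg A K i \<subseteq> proj 0 ` kerg A K i \<times> proj 1 ` kerg A K i \<times> proj 2 ` kerg A K i"
proof
  fix X assume X: "X \<in> kerg A K i"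
  have "proj 0 X \<in> proj 0 ` kerg A K i" "proj 1 X \<in> proj 1 ` kerg A K i" "proj 2 X \<in> proj 2 ` kerg A K i"
    using X by blast+
  moreover have "X = (proj 0 X, proj 1 X, proj 2 X)" by (simp add: proj_def)
  ultimately show "X \<in> proj 0 ` kerg A K i \<times> proj 1 ` kerg A K i \<times> proj 2 ` kerg A K i"
    by (metis mem_Times_iff fst_conv snd_conv)
qed

lemma G_gnode: "k < 3 \<Longrightarrow> G1 ! k = gnode 1 k" "k < 3 \<Longrightarrow> G2 ! k = gnode 2 k" "k < 3 \<Longrightarrow> G3 ! k = gnode 3 k"
  by (auto simp: G1_def G2_def G3_def gnode_def numeral_3_eq_3 less_Suc_eq)

lemma dem_Tn:
  assumes "k1 < 3" "k2 < 3" "k3 < 3"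
  shows "demands (N2 q) (Tn (9*k1+3*k2+k3+1)) = {gnode 1 k1, gnode 2 k2, gnode 3 k3}"
proof -
  have e1: "9*k1+3*k2+k3+1 - 1 = (3*k2+k3) + k1 * 9" by simp
  have e2: "9*k1+3*k2+k3+1 - 1 = k3 + (3*k1+k2) * 3" by simp
  have m: "3*k2+k3 < 9" using assms by linarith
  have a1: "(9*k1+3*k2+k3+1 - 1) div 9 = k1" unfolding e1 using m by simp
  have a2: "(9*k1+3*k2+k3+1 - 1) div 3 = 3*k1+k2" unfolding e2 using assms by simp
  have a3: "(9*k1+3*k2+k3+1 - 1) mod 3 = k3" unfolding e2 mod_mult_self1 using assms by simp
  have a4: "(3*k1+k2) mod 3 = k2" using assms by simp
  have a: "(9*k1+3*k2+k3+1 - 1) div 9 = k1" "((9*k1+3*k2+k3+1 - 1) div 3) mod 3 = k2"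
     "(9*k1+3*k2+k3+1 - 1) mod 3 = k3" using a1 a2 a3 a4 by simp_all
  have b: "1 \<le> 9*k1+3*k2+k3+1" "9*k1+3*k2+k3+1 \<le> 27" using assms by auto
  show ?thesis unfolding N2_def using a b assms by (simp add: N2_demands_def G_gnode del: One_nat_def)
qed

lemma in_Tn_pure:
  assumes "(k1 < 2 \<and> k2 < 2 \<and> k3 < 3) \<or> (k1 = 2 \<and> k2 = 2 \<and> k3 = 2)"
  shows "in_edges (N2 q) (Tn (9*k1+3*k2+k3+1)) = (\<lambda>i. (Vn i, Tn (9*k1+3*k2+k3+1))) ` {1..5} \<union> {}"
proof -
  have "9*k1+3*k2+k3+1 \<notin> {7,8,9,16,17,18}" "\<not> (19 \<le> 9*k1+3*k2+k3+1 \<and> 9*k1+3*k2+k3+1 \<le> 24)"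
    "9*k1+3*k2+k3+1 \<noteq> 25" "9*k1+3*k2+k3+1 \<noteq> 26" "1 \<le> 9*k1+3*k2+k3+1" "9*k1+3*k2+k3+1 \<le> 27"
  proof -
    have "(k1 = 0 \<or> k1 = 1) \<and> (k2 = 0 \<or> k2 = 1) \<and> k3 < 3 \<or> (k1 = 2 \<and> k2 = 2 \<and> k3 = 2)"
      using assms by auto
    then have "9*k1+3*k2+k3+1 \<le> 6 \<or> (10 \<le> 9*k1+3*k2+k3+1 \<and> 9*k1+3*k2+k3+1 \<le> 15)
       \<or> 9*k1+3*k2+k3+1 = 27" using assms by auto
    then show "9*k1+3*k2+k3+1 \<notin> {7,8,9,16,17,18}" "\<not> (19 \<le> 9*k1+3*k2+k3+1 \<and> 9*k1+3*k2+k3+1 \<le> 24)"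
    "9*k1+3*k2+k3+1 \<noteq> 25" "9*k1+3*k2+k3+1 \<noteq> 26" "1 \<le> 9*k1+3*k2+k3+1" "9*k1+3*k2+k3+1 \<le> 27"
      by auto
  qed
  then show ?thesis unfolding in_edges_pair mem_edges_Tn by auto
qed

lemma in_Tn25: "in_edges (N2 q) (Tn 25) = (\<lambda>i. (Vn i, Tn 25)) ` {1..5} \<union> {(SA, Tn 25), (Nn 1, Tn 25)}"
  unfolding in_edges_pair mem_edges_Tn by auto

lemma comb:
  fixes a0 a1 a2 b0 b1 b2 c0 c1 c2 :: nat
  assumes le: "a0 \<le> 2" "a1 \<le> 2" "a2 \<le> 2" "b0 \<le> 2" "b1 \<le> 2" "b2 \<le> 2" "c0 \<le> 2" "c1 \<le> 2" "c2 \<le> 2"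
  and p: "\<And>a b c. a \<in> {a0, a1} \<Longrightarrow> b \<in> {b0, b1} \<Longrightarrow> c \<in> {c0, c1, c2} \<Longrightarrow> a + b + c \<le> 4"
  and p2: "a2 + b2 + c2 \<le> 4"
  and s: "4 \<le> a0 + a1 + a2" "4 \<le> b0 + b1 + b2" "4 \<le> c0 + c1 + c2"
  shows "b2 = 2 \<and> c0 = 2 \<and> a1 \<le> 1"
proof -
  define m3 where "m3 = max c0 (max c1 c2)"
  have m3: "m3 \<in> {c0, c1, c2}" unfolding m3_def by (auto simp: max_def)
  have m32: "m3 = 2" using s(3) le unfolding m3_def by (auto simp: max_def)
  define ma where "ma = max a0 a1"
  have ma: "ma \<in> {a0, a1}" unfolding ma_def by (auto simp: max_def)
  define mb where "mb = max b0 b1"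
  have mb: "mb \<in> {b0, b1}" unfolding mb_def by (auto simp: max_def)
  have "ma + mb + m3 \<le> 4" using p[OF ma mb m3] .
  then have "ma + mb \<le> 2" using m32 by simp
  moreover have "a2 \<ge> 4 - 2 * ma" "b2 \<ge> 4 - 2 * mb" using s(1,2) unfolding ma_def mb_def by (auto simp: max_def)
  ultimately have "ma = 1" "mb = 1" "a2 = 2" "b2 = 2" using le by auto
  then have "c2 = 0" using p2 by simp
  then have "c0 = 2" using s(3) le by simp
  moreover have "a1 \<le> 1" using \<open>ma = 1\<close> unfolding ma_def by simp
  ultimately show ?thesis using \<open>b2 = 2\<close> by simp
qed


lemma b_arg:
  fixes A :: "node \<times> node \<Rightarrow> 'a::{finite,field}^2^2"
  assumes c1: "card (proj 2 ` {X \<in> kerg A K 1. proj 0 X = 0}) \<le> 1"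
  shows "proj 1 ` kerg A K 1 = UNIV"
proof -
  let ?S = "{X \<in> kerg A K 1. proj 0 X = 0}"
  have z: "(0::'a gv) \<in> ?S" by (simp add: kerg_def phi_zero proj_zero)
  have c0: "proj 2 X = 0" if "X \<in> kerg A K 1" "proj 0 X = 0" for X
  proof -
    have "proj 2 X \<in> proj 2 ` ?S" "proj 2 0 \<in> proj 2 ` ?S" using that z by blast+
    moreover have fin: "finite (proj 2 ` ?S)" by simp
    moreover have c1': "card (proj 2 ` ?S) \<le> Suc 0" using c1 by simp
    ultimately have "proj 2 X = proj 2 0"
      using iffD1[OF card_le_Suc0_iff_eq[OF fin] c1'] by blast
    then show ?thesis by (simp add: proj_zero)
  qed
  define psi where "psi p = phi A K 1 (Vn 1) (0, p)" for p :: "('a^2) \<times> ('a^2)"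
  have padd: "psi (p + p') = psi p + psi p'" for p p'
  proof -
    have e: "((0::'a^2), p + p') = ((0::'a^2), p) + (0, p')" by simp
    show ?thesis by (simp only: psi_def e phi_add)
  qed
  have a: "CARD(('a^2) \<times> ('a^2)) \<le> card (range psi) * card {p. psi p = 0}"
    using card_kernel_bound[of psi, OF padd] .
  have b: "card (range psi) \<le> CARD('a^2)" by (rule card_mono) auto
  have "CARD(('a^2) \<times> ('a^2)) \<le> CARD('a^2) * card {p. psi p = 0}"
    by (rule order_trans[OF a mult_le_mono1[OF b]])
  then have "CARD('a^2) * CARD('a^2) \<le> CARD('a^2) * card {p. psi p = 0}"
    by (simp add: UNIV_Times_UNIV[symmetric] card_cartesian_product del: UNIV_Times_UNIV)
  moreover have "0 < CARD('a^2)" by simp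
  ultimately have k1: "CARD('a^2) \<le> card {p. psi p = 0}" by (metis nat_mult_le_cancel1)
  have sub: "{p. psi p = 0} \<subseteq> (\<lambda>b. (b, 0)) ` {b. psi (b, 0) = 0}"
  proof
    fix p assume "p \<in> {p. psi p = 0}"
    then have p: "psi p = 0" by simp
    then have "(0, fst p, snd p) \<in> kerg A K 1" unfolding psi_def kerg_def by simp
    then have "snd p = 0" using c0[of "(0, fst p, snd p)"] by (simp add: proj_def)
    then have "p = (fst p, 0)" by (metis prod.collapse)
    then show "p \<in> (\<lambda>b. (b, 0)) ` {b. psi (b, 0) = 0}" using p
      by (metis (mono_tags, lifting) image_eqI mem_Collect_eq)
  qed
  have "card {p. psi p = 0} \<le> card ((\<lambda>b. (b, 0::'a^2)) ` {b. psi (b, 0) = 0})"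
    by (rule card_mono[OF _ sub]) simp
  also have "\<dots> \<le> card {b. psi (b, 0) = 0}" by (rule card_image_le) simp
  finally have "CARD('a^2) \<le> card {b. psi (b, 0) = 0}" using k1 by linarith
  then have allb: "{b. psi (b, 0) = 0} = UNIV"
    by (metis card_seteq finite subset_UNIV)
  show ?thesis
  proof (rule set_eqI, rule iffI)
    fix b :: "'a^2"
    have "psi (b, 0) = 0" using allb by auto
    then have "(0, b, 0) \<in> kerg A K 1" unfolding psi_def kerg_def by simp
    then show "b \<in> proj 1 ` kerg A K 1" by (intro image_eqI[of _ _ "(0, b, 0)"]) (auto simp: proj_def)
  qed simp
qed

lemma card3: "card (X \<times> Y \<times> Z) = card X * card Y * card Z"
  by (simp add: card_cartesian_product)

lemma m3_contra:
  fixes A :: "node \<times> node \<Rightarrow> 'a::{finite,field}^2^2"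
  assumes q2: "2 \<le> q" and sol: "is_vlnc_solution (N2 q) A K B" and mx: "Mq q A K 1 SX = 0"
  shows False
proof -
  have dec: "\<And>j x s. s \<in> demands (N2 q) (Tn j) \<Longrightarrow>
      (\<Sum>e\<in>in_edges (N2 q) (Tn j). B (Tn j) s e *v yv q A K x e) = x s"
    using sol unfolding sol_iff by blast
  define k where "k = CARD('a)"
  have k2: "1 < k" using card_field_ge2[where 'a='a] unfolding k_def by simp
  define S where "S i j = proj j ` kerg A K i" for i j
  define e where "e i j = (SOME t. t \<le> 2 \<and> card (S i j) = k ^ t)" for i j
  have e: "e i j \<le> 2 \<and> card (S i j) = k ^ e i j" for i j
    unfolding e_def S_def k_def by (rule someI_ex) (rule sg_exp)
  have pure: "e 1 k1 + e 2 k2 + e 3 k3 \<le> 4"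
    if kk: "(k1 < 2 \<and> k2 < 2 \<and> k3 < 3) \<or> (k1 = 2 \<and> k2 = 2 \<and> k3 = 2)" for k1 k2 k3
  proof -
    have k3: "k1 < 3" "k2 < 3" "k3 < 3" using kk by auto
    have "card (S 1 k1 \<times> S 2 k2 \<times> S 3 k3) \<le> CARD('a)^4"
      unfolding S_def
    proof (rule term_bound[where j = "9*k1+3*k2+k3+1" and Xe = "{}" and ?k1.0 = k1 and ?k2.0 = k2 and ?k3.0 = k3
          and q = q and A = A and K = K and B = B])
      show "gnode 1 k1 \<in> demands (N2 q) (Tn (9 * k1 + 3 * k2 + k3 + 1))"
        "gnode 2 k2 \<in> demands (N2 q) (Tn (9 * k1 + 3 * k2 + k3 + 1))"
        "gnode 3 k3 \<in> demands (N2 q) (Tn (9 * k1 + 3 * k2 + k3 + 1))"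
        using dem_Tn[OF k3] by auto
      show "in_edges (N2 q) (Tn (9 * k1 + 3 * k2 + k3 + 1)) =
          (\<lambda>i. (Vn i, Tn (9 * k1 + 3 * k2 + k3 + 1))) ` {1..5} \<union> {}"
        by (rule in_Tn_pure[OF kk])
    qed (auto simp: dec k3)
    then have "k ^ (e 1 k1 + e 2 k2 + e 3 k3) \<le> k ^ 4"
      using e[of 1 k1] e[of 2 k2] e[of 3 k3] unfolding card3 k_def by (simp add: power_add)
    then show ?thesis using power_le_imp_le_exp[OF k2] by blast
  qed
  have sums: "4 \<le> e i 0 + e i 1 + e i 2" for i
  proof -
    have "k ^ 4 \<le> card (kerg A K i)" unfolding k_def by (rule card_kerg)
    also have "\<dots> \<le> card (S i 0 \<times> S i 1 \<times> S i 2)"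
      unfolding S_def by (rule card_mono[OF _ kerg_sub]) simp
    also have "\<dots> = k ^ (e i 0 + e i 1 + e i 2)"
      using e[of i 0] e[of i 1] e[of i 2] unfolding card3 by (simp add: power_add)
    finally show ?thesis using power_le_imp_le_exp[OF k2] by blast
  qed
  have cb: "e 2 2 = 2 \<and> e 3 0 = 2 \<and> e 1 1 \<le> 1"
  proof (rule comb)
    show "e 1 0 \<le> 2" "e 1 1 \<le> 2" "e 1 2 \<le> 2" "e 2 0 \<le> 2" "e 2 1 \<le> 2" "e 2 2 \<le> 2"
      "e 3 0 \<le> 2" "e 3 1 \<le> 2" "e 3 2 \<le> 2" using e by auto
    show "e 1 2 + e 2 2 + e 3 2 \<le> 4" using pure[of 2 2 2] by simp
    show "4 \<le> e 1 0 + e 1 1 + e 1 2" "4 \<le> e 2 0 + e 2 1 + e 2 2" "4 \<le> e 3 0 + e 3 1 + e 3 2"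
      using sums by auto
    fix a b c assume "a \<in> {e 1 0, e 1 1}" "b \<in> {e 2 0, e 2 1}" "c \<in> {e 3 0, e 3 1, e 3 2}"
    then show "a + b + c \<le> 4" using pure[of 0 0 0] pure[of 0 0 1] pure[of 0 0 2]
      pure[of 0 1 0] pure[of 0 1 1] pure[of 0 1 2] pure[of 1 0 0] pure[of 1 0 1] pure[of 1 0 2]
      pure[of 1 1 0] pure[of 1 1 1] pure[of 1 1 2] by auto
  qed
  define S1' where "S1' = {X \<in> kerg A K 1. proj 0 X = 0}"
  have inMn1: "in_edges (N2 q) (Mn 1) = {(SA, Mn 1), (SX, Mn 1)}"
    unfolding in_edges_pair mem_edges_Mn by auto
  have mq: "K (SX, Mn 1) (Mn 1, Nn 1) ** A (SX, Mn 1) = 0"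
    using mx unfolding Mq_def mem_edges_Mn by simp
  have t25: "card (proj 2 ` S1' \<times> S 2 2 \<times> S 3 0) \<le> CARD('a)^4"
    unfolding S_def
  proof (rule term_bound[where j = 25 and Xe = "{(SA, Tn 25), (Nn 1, Tn 25)}" and ?k1.0 = 2 and ?k2.0 = 2 and ?k3.0 = 0
        and q = q and A = A and K = K and B = B])
    have d: "demands (N2 q) (Tn 25) = {gnode 1 2, gnode 2 2, gnode 3 0}" using dem_Tn[of 2 2 0 q] by simp
    show "gnode 1 2 \<in> demands (N2 q) (Tn 25)" "gnode 2 2 \<in> demands (N2 q) (Tn 25)"
      "gnode 3 0 \<in> demands (N2 q) (Tn 25)" unfolding d by auto
    show "in_edges (N2 q) (Tn 25) = (\<lambda>i. (Vn i, Tn 25)) ` {1..5} \<union> {(SA, Tn 25), (Nn 1, Tn 25)}"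
      by (rule in_Tn25)
    show "S1' \<subseteq> kerg A K 1" unfolding S1'_def by auto
  next
    fix X1 X2 X3 ee assume X1: "X1 \<in> S1'" and ee: "ee \<in> {(SA, Tn 25), (Nn 1, Tn 25)}"
    have a0: "msg3 X1 X2 X3 SA = 0" using X1 unfolding S1'_def msg3_def by simp
    show "yv q A K (msg3 X1 X2 X3) ee = 0"
    proof (cases "ee = (SA, Tn 25)")
      case True then show ?thesis using a0 by (simp add: yv_src SA_SX_src)
    next
      case False
      then have ee1: "ee = (Nn 1, Tn 25)" using ee by simp
      have "yv q A K (msg3 X1 X2 X3) (Mn 1, Nn 1) = 0"
        using a0 mq unfolding yv_Mn inMn1
        by (simp add: matrix_vector_mul_assoc)
      then show ?thesis unfolding ee1 using yv_Nn[of 1 q A K "msg3 X1 X2 X3" "Tn 25"] by simp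
    qed
  qed (auto simp: dec)
  have "card (proj 2 ` S1') * k ^ 4 \<le> 1 * k ^ 4"
    using t25 cb e[of 2 2] e[of 3 0] unfolding card3 k_def by (simp add: power_add[symmetric] mult.assoc)
  then have "card (proj 2 ` S1') \<le> 1" using k2 by (metis mult_le_cancel2 zero_less_power not_le zero_less_one less_trans)
  then have "proj 1 ` kerg A K 1 = UNIV" unfolding S1'_def by (rule b_arg)
  then have "k ^ e 1 1 = k ^ 2" using e[of 1 1] unfolding S_def k_def by simp
  then have "e 1 1 = 2" using k2 by (simp add: power_inject_exp)
  then show False using cb by simp
qed

definition sel :: "2 \<Rightarrow> 2 \<Rightarrow> 'a::zero_neq_one^2^2" where
  "sel a b = (\<chi> i j. if i = a \<and> j = b then 1 else 0)"

definition pick :: "nat \<Rightarrow> 2" where "pick k = (if k = 0 then 1 else 2)"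

lemma sel_mv: "sel a b *v v = (\<chi> i. if i = a then v $ b else 0)"
  by (simp add: sel_def matrix_vector_mult_def vec_eq_iff if_distrib if_distribR sum.delta cong: if_cong)

definition Kub :: "nat \<Rightarrow> nat \<Rightarrow> node \<Rightarrow> 'a::field^2^2" where
  "Kub i l s = (if i = 1 then
        (if l = 1 then (if s = SA then sel 1 1 else if s = SB then sel 2 1 else 0)
         else if l = 4 then (if s = SA then sel 1 2 else if s = SB then sel 2 2 else 0)
         else if l = 5 then (if s = SC then mat 1 else 0) else 0)
     else if i = 2 then
        (if l = 2 then (if s = SR then sel 1 1 else if s = SS then sel 2 1 else 0)
         else if l = 4 then (if s = SW then mat 1 else 0)
         else if l = 5 then (if s = SR then sel 1 2 else if s = SS then sel 2 2 else 0) else 0)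
     else
        (if l = 3 then (if s = SZ then mat 1 else 0)
         else if l = 4 then (if s = SX then sel 1 1 else if s = SY then sel 2 1 else 0)
         else if l = 5 then (if s = SX then sel 1 2 else if s = SY then sel 2 2 else 0) else 0))"

definition kk1 :: "nat \<Rightarrow> nat" where "kk1 j = (j - 1) div 9"
definition kk2 :: "nat \<Rightarrow> nat" where "kk2 j = ((j - 1) div 3) mod 3"
definition kk3 :: "nat \<Rightarrow> nat" where "kk3 j = (j - 1) mod 3"

definition Kvn :: "nat \<Rightarrow> nat \<Rightarrow> nat \<Rightarrow> 'a::field^2^2" where
  "Kvn l j g = (if l \<le> 3 then (if g = l then mat 1 else 0)
     else if l = 4 then
       (if kk1 j = 2 \<and> kk2 j = 2 then (if g = 2 then mat 1 else 0)
        else if g = 3 then (if kk3 j < 2 then sel 1 (pick (kk3 j)) else 0)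
        else if g = 1 then (if kk1 j < 2 then sel 2 (pick (kk1 j)) else 0) else 0)
     else
       (if kk1 j = 2 \<and> kk2 j = 2 then (if g = 1 then mat 1 else 0)
        else if g = 3 then (if kk3 j < 2 then sel 1 (pick (kk3 j)) else 0)
        else if g = 2 then (if kk2 j < 2 then sel 2 (pick (kk2 j)) else 0) else 0))"

definition Kc :: "node \<times> node \<Rightarrow> node \<times> node \<Rightarrow> 'a::field^2^2" where
  "Kc e' e = (case fst e of Mn _ \<Rightarrow> mat 1 | Nn _ \<Rightarrow> mat 1
     | Ub i \<Rightarrow> (case snd e of Vn l \<Rightarrow> Kub i l (fst e') | _ \<Rightarrow> 0)
     | Vn l \<Rightarrow> (case snd e of Tn j \<Rightarrow> (case fst e' of Ub g \<Rightarrow> Kvn l j g | _ \<Rightarrow> 0) | _ \<Rightarrow> 0)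
     | _ \<Rightarrow> 0)"

definition Bt :: "nat \<Rightarrow> node \<Rightarrow> node \<Rightarrow> 'a::field^2^2" where
  "Bt j s a = (let k1 = kk1 j; k2 = kk2 j; k3 = kk3 j in
     if s = gnode 1 k1 then
       (if k1 < 2 then (if a = Vn 1 then sel 1 (pick k1) else if a = Vn 4 then sel 2 2 else 0)
        else if k2 = 2 then (if a = Vn 5 then mat 1 else 0) else (if a = SC then mat 1 else 0))
     else if s = gnode 2 k2 then
       (if k2 < 2 then (if a = Vn 2 then sel 1 (pick k2) else if a = Vn 5 then sel 2 2 else 0)
        else if k1 = 2 then (if a = Vn 4 then mat 1 else 0) else (if a = SW then mat 1 else 0))
     else if s = gnode 3 k3 then
       (if k3 = 2 then (if a = Vn 3 then mat 1 else 0)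
        else if k1 = 2 \<and> k2 = 2 then
          (if k3 = 0 then (if a = Nn 1 then mat 1 else if a = SA then - mat 1 else 0)
           else (if a = SY then mat 1 else 0))
        else (if a = Vn 4 then sel 1 1 else if a = Vn 5 then sel 2 1 else 0))
     else 0)"

definition Br :: "nat \<Rightarrow> nat \<Rightarrow> node \<Rightarrow> 'a::field^2^2" where
  "Br q i a = (if i = 1 then (if a = Nn (q+3) then mat 1 else if a = Nn 1 then - mat 1
                              else if (\<exists>k. a = XB k) then - mat 1 else 0)
     else if i \<le> q + 2 then (if a = Nn (q+3) then mat 1 else if a = Nn i then - mat 1
                              else if a = SX \<or> a = SA then - mat 1 else 0)
     else (if (\<exists>k. a = Nn k) then mat 1 else 0))"

definition Bc :: "nat \<Rightarrow> node \<Rightarrow> node \<Rightarrow> node \<times> node \<Rightarrow> 'a::field^2^2" where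
  "Bc q t s e = (case t of Tn j \<Rightarrow> Bt j s (fst e) | Rho i \<Rightarrow> Br q i (fst e) | _ \<Rightarrow> 0)"

definition Ac :: "node \<times> node \<Rightarrow> 'a::field^2^2" where "Ac e = mat 1"


lemma Kc_Mn: "Kc e' (Mn k, h) = mat 1" by (simp add: Kc_def)
lemma Kc_Nn: "Kc e' (Nn k, h) = mat 1" by (simp add: Kc_def)

lemma yvc_Mn: "yv q Ac Kc x (Mn k, h) = (\<Sum>e\<in>in_edges (N2 q) (Mn k). x (fst e))"
  by (simp add: yv_Mn Kc_Mn Ac_def)

lemma yvc_Nn: "1 \<le> k \<Longrightarrow> k \<le> q + 3 \<Longrightarrow> yv q Ac Kc x (Nn k, h) = yv q Ac Kc x (Mn k, Nn k)"
  by (simp add: yv_Nn Kc_Nn)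

definition JX :: "nat \<Rightarrow> nat \<Rightarrow> nat set" where
  "JX q k = {i. 2 \<le> i \<and> i \<le> q+2 \<and> ((2 \<le> k \<and> k \<le> q+2 \<and> i \<noteq> k) \<or> k = q+3)}"

lemma eMn: "yv q Ac Kc x (Mn k, Nn k) =
   (if (1 \<le> k \<and> k \<le> q+1) \<or> k = q+3 then x SA else 0) + (if k = 1 \<or> (4 \<le> k \<and> k \<le> q+3) then x SX else 0)
   + (\<Sum>i\<in>JX q k. x (XB i))"
proof -
  let ?SA = "if (1 \<le> k \<and> k \<le> q+1) \<or> k = q+3 then {SA} else {}"
  let ?SX = "if k = 1 \<or> (4 \<le> k \<and> k \<le> q+3) then {SX} else {}"
  have ins: "{s. (s, Mn k) \<in> edges (N2 q)} = ?SA \<union> ?SX \<union> XB ` JX q k"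
    unfolding mem_edges_Mn JX_def by auto
  have "in_edges (N2 q) (Mn k) = (\<lambda>s. (s, Mn k)) ` {s. (s, Mn k) \<in> edges (N2 q)}"
    unfolding in_edges_pair by auto
  then have "yv q Ac Kc x (Mn k, Nn k) = (\<Sum>s\<in>{s. (s, Mn k) \<in> edges (N2 q)}. x s)"
    unfolding yvc_Mn by (simp add: sum.reindex inj_on_def)
  also have "\<dots> = (\<Sum>s\<in>?SA \<union> ?SX \<union> XB ` JX q k. x s)" unfolding ins ..
  also have "\<dots> = (\<Sum>s\<in>?SA. x s) + (\<Sum>s\<in>?SX. x s) + (\<Sum>s\<in>XB ` JX q k. x s)"
    by (subst sum.union_disjoint; (auto simp: JX_def)?)+
  also have "(\<Sum>s\<in>XB ` JX q k. x s) = (\<Sum>i\<in>JX q k. x (XB i))"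
    by (simp add: sum.reindex inj_on_def)
  finally show ?thesis by simp
qed

lemma neg_mv [simp]: "(- (M::'a::ring_1^'n^'m)) *v v = - (M *v v)"
  by (simp add: vec_eq_iff matrix_vector_mult_def sum_negf)

lemma in_Rho_1: "in_edges (N2 q) (Rho 1) = {(Nn 1, Rho 1), (Nn (q+3), Rho 1)} \<union> (\<lambda>i. (XB i, Rho 1)) ` {2..q+1}"
  unfolding in_edges_pair mem_edges_Rho by auto

lemma JX_simps: "2 \<le> q \<Longrightarrow> JX q (q+3) = {2..q+2}" "JX q (Suc 0) = {}"
  "2 \<le> i \<Longrightarrow> i \<le> q + 2 \<Longrightarrow> JX q i = {2..q+2} - {i}"
  by (auto simp: JX_def)

lemma yv_src_c: "s \<in> srcs (N2 q) \<Longrightarrow> yv q Ac Kc x (s, h) = x s"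
  by (simp add: yv_src Ac_def)

lemma XB_src: "2 \<le> i \<Longrightarrow> i \<le> q + 2 \<Longrightarrow> XB i \<in> srcs (N2 q)"
  by (simp add: N2_def N2_srcs_def)

lemma dec_Rho1:
  assumes q2: "2 \<le> q"
  shows "(\<Sum>e\<in>in_edges (N2 q) (Rho 1). Bc q (Rho 1) s e *v yv q Ac Kc x e) = x (XB (q+2))"
proof -
  let ?f = "\<lambda>e. Bc q (Rho 1) s e *v yv q Ac Kc x e"
  have "(\<Sum>e\<in>in_edges (N2 q) (Rho 1). ?f e) = ?f (Nn 1, Rho 1) + ?f (Nn (q+3), Rho 1)
      + (\<Sum>e\<in>(\<lambda>i. (XB i, Rho 1)) ` {2..q+1}. ?f e)"
    unfolding in_Rho_1 by (subst sum.union_disjoint) auto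
  also have "(\<Sum>e\<in>(\<lambda>i. (XB i, Rho 1)) ` {2..q+1}. ?f e) = (\<Sum>i\<in>{2..q+1}. - x (XB i))"
    by (subst sum.reindex) (auto simp: inj_on_def Bc_def Br_def yv_src_c XB_src intro!: sum.cong)
  also have "?f (Nn 1, Rho 1) = - (x SA + x SX)"
    by (simp add: Bc_def Br_def yvc_Nn eMn JX_simps)
  also have "?f (Nn (q+3), Rho 1) = x SA + x SX + (\<Sum>i\<in>{2..q+2}. x (XB i))"
    using q2 by (simp add: Bc_def Br_def yvc_Nn eMn JX_simps)
  also have "(\<Sum>i\<in>{2..q+2}. x (XB i)) = (\<Sum>i\<in>{2..q+1}. x (XB i)) + x (XB (q+2))"
    using q2 by (simp add: sum.cl_ivl_Suc)
  finally show ?thesis by (simp add: sum_negf)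
qed


lemma sum_split_i: "2 \<le> i \<Longrightarrow> i \<le> q + 2 \<Longrightarrow>
    (\<Sum>k\<in>{2..q+2}. x (XB k)) = x (XB i) + (\<Sum>k\<in>{2..q+2} - {i}. x (XB k))"
  by (rule sum.remove) auto

lemma dec_Rho_mid:
  assumes q2: "2 \<le> q" and i: "2 \<le> i" "i \<le> q + 1"
  shows "(\<Sum>e\<in>in_edges (N2 q) (Rho i). Bc q (Rho i) s e *v yv q Ac Kc x e) = x (XB i)"
proof -
  let ?f = "\<lambda>e. Bc q (Rho i) s e *v yv q Ac Kc x e"
  have a: "(\<Sum>e\<in>in_edges (N2 q) (Rho i). ?f e) = ?f (Nn i, Rho i) + ?f (Nn (q+3), Rho i)
      + (if i \<le> 3 then - x SX else 0)"
    unfolding in_Rho_mid[OF i] using i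
    by (auto simp: Bc_def Br_def yv_src_c SA_SX_src)
  have b: "?f (Nn i, Rho i) = - ((if i \<le> q + 1 then x SA else 0) + (if 4 \<le> i then x SX else 0)
       + (\<Sum>k\<in>{2..q+2} - {i}. x (XB k)))"
    using i by (simp add: Bc_def Br_def yvc_Nn eMn JX_simps)
  have c: "?f (Nn (q+3), Rho i) = x SA + x SX + (\<Sum>k\<in>{2..q+2}. x (XB k))"
    using q2 i by (simp add: Bc_def Br_def yvc_Nn eMn JX_simps)
  show ?thesis unfolding a b c using i sum_split_i[of i q x] by (auto simp del: sum.cl_ivl_Suc)
qed

lemma dec_Rho_q2':
  assumes q2: "2 \<le> q"
  shows "(\<Sum>e\<in>in_edges (N2 q) (Rho (q+2)). Bc q (Rho (q+2)) s e *v yv q Ac Kc x e) = x (XB (q+2))"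
proof -
  let ?i = "q + 2"
  let ?f = "\<lambda>e. Bc q (Rho ?i) s e *v yv q Ac Kc x e"
  have a: "(\<Sum>e\<in>in_edges (N2 q) (Rho ?i). ?f e) = ?f (Nn ?i, Rho ?i) + ?f (Nn (q+3), Rho ?i) - x SA"
    unfolding in_Rho_q2[OF q2] using q2
    by (auto simp: Bc_def Br_def yv_src_c SA_SX_src)
  have b: "?f (Nn ?i, Rho ?i) = - (x SX + (\<Sum>k\<in>{2..q+2} - {?i}. x (XB k)))"
    using q2 by (simp add: Bc_def Br_def yvc_Nn eMn JX_simps)
  have c: "?f (Nn (q+3), Rho ?i) = x SA + x SX + (\<Sum>k\<in>{2..q+2}. x (XB k))"
    using q2 by (simp add: Bc_def Br_def yvc_Nn eMn JX_simps)
  show ?thesis unfolding a b c using q2 sum_split_i[of ?i q x] by (auto simp del: sum.cl_ivl_Suc)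
qed


lemma sum_if_const: "finite A \<Longrightarrow> (\<Sum>k\<in>A. (if P k then a else 0)) = of_nat (card {k\<in>A. P k}) * (a::'a::semiring_1)"
  by (simp add: sum.inter_filter[symmetric])

lemma sum_eMn_comp:
  assumes q2: "2 \<le> q" and qz: "(of_nat q :: 'a::field) = 0"
  shows "(\<Sum>k\<in>{1..q+2}. yv q Ac Kc (x :: node \<Rightarrow> 'a^2) (Mn k, Nn k) $ c) = x SA $ c"
proof -
  let ?cA = "\<lambda>k. (1 \<le> k \<and> k \<le> q+1) \<or> k = q+3"
  let ?cX = "\<lambda>k. k = 1 \<or> (4 \<le> k \<and> k \<le> q+3)"
  have e: "yv q Ac Kc x (Mn k, Nn k) $ c = (if ?cA k then x SA $ c else 0) + (if ?cX k then x SX $ c else 0)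
     + (\<Sum>i\<in>{2..q+2}. if i \<in> JX q k then x (XB i) $ c else 0)" for k
  proof -
    have i: "{2..q+2} \<inter> JX q k = JX q k" by (auto simp: JX_def)
    have "(\<Sum>i\<in>{2..q+2}. if i \<in> JX q k then x (XB i) $ c else 0) = (\<Sum>i\<in>{2..q+2} \<inter> JX q k. x (XB i) $ c)"
      by (rule sum.inter_restrict[symmetric]) simp
    then have "(\<Sum>i\<in>JX q k. x (XB i) $ c) = (\<Sum>i\<in>{2..q+2}. if i \<in> JX q k then x (XB i) $ c else 0)"
      unfolding i by simp
    then show ?thesis by (simp add: eMn)
  qed
  have s1: "(\<Sum>k\<in>{1..q+2}. (if ?cA k then x SA $ c else 0)) = of_nat (q+1) * x SA $ c"
  proof -
    have h: "{k\<in>{1..q+2}. ?cA k} = {1..q+1}" by auto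
    show ?thesis unfolding sum_if_const[OF finite_atLeastAtMost] h by simp
  qed
  have s2: "(\<Sum>k\<in>{1..q+2}. (if ?cX k then x SX $ c else 0)) = of_nat q * x SX $ c"
  proof -
    have h1: "{k\<in>{1..q+2}. ?cX k} = insert 1 {4..q+2}" using q2 by auto
    have h2: "card (insert 1 {4..q+2}) = q" using q2 by simp
    show ?thesis unfolding sum_if_const[OF finite_atLeastAtMost] h1 h2 ..
  qed
  have s3: "(\<Sum>k\<in>{1..q+2}. \<Sum>i\<in>{2..q+2}. if i \<in> JX q k then x (XB i) $ c else 0)
       = (\<Sum>i\<in>{2..q+2}. of_nat q * x (XB i) $ c)"
  proof -
    have "(\<Sum>k\<in>{1..q+2}. \<Sum>i\<in>{2..q+2}. if i \<in> JX q k then x (XB i) $ c else 0)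
        = (\<Sum>i\<in>{2..q+2}. \<Sum>k\<in>{1..q+2}. if i \<in> JX q k then x (XB i) $ c else 0)"
      by (rule sum.swap)
    also have "\<dots> = (\<Sum>i\<in>{2..q+2}. of_nat q * x (XB i) $ c)"
    proof (rule sum.cong[OF refl])
      fix i assume i: "i \<in> {2..q+2}"
      have h1: "{k\<in>{1..q+2}. i \<in> JX q k} = {2..q+2} - {i}" using i by (auto simp: JX_def)
      have h2: "card ({2..q+2} - {i}) = q" using i by simp
      show "(\<Sum>k\<in>{1..q+2}. if i \<in> JX q k then x (XB i) $ c else 0) = of_nat q * x (XB i) $ c"
        unfolding sum_if_const[OF finite_atLeastAtMost] h1 h2 ..
    qed
    finally show ?thesis .
  qed
  have "(\<Sum>k\<in>{1..q+2}. yv q Ac Kc x (Mn k, Nn k) $ c)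
      = of_nat (q+1) * x SA $ c + of_nat q * x SX $ c + (\<Sum>i\<in>{2..q+2}. of_nat q * x (XB i) $ c)"
    unfolding e sum.distrib s1 s2 s3 ..
  then show ?thesis using qz by simp
qed

lemma dec_Rho_q3':
  assumes q2: "2 \<le> q" and qz: "(of_nat q :: 'a::field) = 0"
  shows "(\<Sum>e\<in>in_edges (N2 q) (Rho (q+3)). Bc q (Rho (q+3)) s e *v yv q Ac Kc (x :: node \<Rightarrow> 'a^2) e) = x SA"
proof -
  have "(\<Sum>e\<in>in_edges (N2 q) (Rho (q+3)). Bc q (Rho (q+3)) s e *v yv q Ac Kc x e)
      = (\<Sum>k\<in>{1..q+2}. Bc q (Rho (q+3)) s (Nn k, Rho (q+3)) *v yv q Ac Kc x (Nn k, Rho (q+3)))"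
    by (rule dec_Rho_q3[OF q2])
  also have "\<dots> = (\<Sum>k\<in>{1..q+2}. yv q Ac Kc x (Mn k, Nn k))"
    by (intro sum.cong) (auto simp: Bc_def Br_def yvc_Nn)
  also have "\<dots> = x SA"
    using sum_eMn_comp[OF q2 qz] by (simp add: vec_eq_iff)
  finally show ?thesis .
qed

lemma in_Vn45: "l \<in> {4,5} \<Longrightarrow> in_edges (N2 q) (Vn l) = {(Ub 1, Vn l), (Ub 2, Vn l), (Ub 3, Vn l)}"
  unfolding in_edges_pair mem_edges_Vn by auto

lemma yvc_Ub: "i \<in> {1,2,3} \<Longrightarrow> yv q Ac Kc x (Ub i, Vn l) =
   Kub i l (gnode i 0) *v x (gnode i 0) + Kub i l (gnode i 1) *v x (gnode i 1) + Kub i l (gnode i 2) *v x (gnode i 2)"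
  by (simp add: yv_Ub_phi phi_def Kc_def Ac_def proj_def)

lemma yvc_Vn123: "l \<in> {1,2,3} \<Longrightarrow> yv q Ac Kc x (Vn l, Tn j) = yv q Ac Kc x (Ub l, Vn l)"
  by (auto simp: yv_Vn Kc_def Kvn_def)

lemma yvc_Vn45: "l \<in> {4,5} \<Longrightarrow> yv q Ac Kc x (Vn l, Tn j) =
   Kvn l j 1 *v yv q Ac Kc x (Ub 1, Vn l) + Kvn l j 2 *v yv q Ac Kc x (Ub 2, Vn l) + Kvn l j 3 *v yv q Ac Kc x (Ub 3, Vn l)"
proof -
  assume l: "l \<in> {4,5}"
  have "yv q Ac Kc x (Vn l, Tn j) = (\<Sum>e'\<in>in_edges (N2 q) (Vn l). Kc e' (Vn l, Tn j) *v yv q Ac Kc x e')"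
  proof -
    have "\<And>e'. e' \<in> in_edges (N2 q) (Vn l) \<Longrightarrow> y2 (N2 q) Ac Kc x e' = yv q Ac Kc x e'"
      using l by (auto simp: in_Vn45 yv_def Mn_not_src)
    then show ?thesis by (simp add: yv_def y3_def Mn_not_src mid_not_src)
  qed
  also have "\<dots> = Kvn l j 1 *v yv q Ac Kc x (Ub 1, Vn l) + Kvn l j 2 *v yv q Ac Kc x (Ub 2, Vn l) + Kvn l j 3 *v yv q Ac Kc x (Ub 3, Vn l)"
    using l by (simp add: in_Vn45 Kc_def add.assoc)
  finally show ?thesis .
qed

lemma M3_srcs: "SA \<in> srcs (N2 q)" "SB \<in> srcs (N2 q)" "SC \<in> srcs (N2 q)" "SR \<in> srcs (N2 q)"
  "SS \<in> srcs (N2 q)" "SW \<in> srcs (N2 q)" "SX \<in> srcs (N2 q)" "SY \<in> srcs (N2 q)" "SZ \<in> srcs (N2 q)"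
  by (auto simp: N2_def N2_srcs_def)

lemmas tn_simps = Bc_def Bt_def kk1_def kk2_def kk3_def gnode_def pick_def yvc_Vn123 yvc_Vn45 yvc_Ub
        Kvn_def Kub_def sel_mv vec_eq_iff forall_2 yv_src_c M3_srcs yvc_Nn eMn JX_simps(2)

lemma tn_1: "s \<in> demands (N2 q) (Tn 1) \<Longrightarrow>
   (\<Sum>e\<in>in_edges (N2 q) (Tn 1). Bc q (Tn 1) s e *v yv q Ac Kc x e) = x s"
proof -
  have ie: "in_edges (N2 q) (Tn 1) = {(Vn 1, Tn 1), (Vn 2, Tn 1), (Vn 3, Tn 1), (Vn 4, Tn 1), (Vn 5, Tn 1)}"
    unfolding in_edges_pair mem_edges_Tn by auto
  have dm: "demands (N2 q) (Tn 1) = {SA, SR, SX}" by (simp add: N2_def N2_demands_def G1_def G2_def G3_def)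
  assume "s \<in> demands (N2 q) (Tn 1)"
  then show ?thesis unfolding dm ie by (auto simp: tn_simps)
qed

lemma tn_2: "s \<in> demands (N2 q) (Tn 2) \<Longrightarrow>
   (\<Sum>e\<in>in_edges (N2 q) (Tn 2). Bc q (Tn 2) s e *v yv q Ac Kc x e) = x s"
proof -
  have ie: "in_edges (N2 q) (Tn 2) = {(Vn 1, Tn 2), (Vn 2, Tn 2), (Vn 3, Tn 2), (Vn 4, Tn 2), (Vn 5, Tn 2)}"
    unfolding in_edges_pair mem_edges_Tn by auto
  have dm: "demands (N2 q) (Tn 2) = {SA, SR, SY}" by (simp add: N2_def N2_demands_def G1_def G2_def G3_def)
  assume "s \<in> demands (N2 q) (Tn 2)"
  then show ?thesis unfolding dm ie by (auto simp: tn_simps)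
qed

lemma tn_3: "s \<in> demands (N2 q) (Tn 3) \<Longrightarrow>
   (\<Sum>e\<in>in_edges (N2 q) (Tn 3). Bc q (Tn 3) s e *v yv q Ac Kc x e) = x s"
proof -
  have ie: "in_edges (N2 q) (Tn 3) = {(Vn 1, Tn 3), (Vn 2, Tn 3), (Vn 3, Tn 3), (Vn 4, Tn 3), (Vn 5, Tn 3)}"
    unfolding in_edges_pair mem_edges_Tn by auto
  have dm: "demands (N2 q) (Tn 3) = {SA, SR, SZ}" by (simp add: N2_def N2_demands_def G1_def G2_def G3_def)
  assume "s \<in> demands (N2 q) (Tn 3)"
  then show ?thesis unfolding dm ie by (auto simp: tn_simps)
qed

lemma tn_4: "s \<in> demands (N2 q) (Tn 4) \<Longrightarrow>
   (\<Sum>e\<in>in_edges (N2 q) (Tn 4). Bc q (Tn 4) s e *v yv q Ac Kc x e) = x s"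
proof -
  have ie: "in_edges (N2 q) (Tn 4) = {(Vn 1, Tn 4), (Vn 2, Tn 4), (Vn 3, Tn 4), (Vn 4, Tn 4), (Vn 5, Tn 4)}"
    unfolding in_edges_pair mem_edges_Tn by auto
  have dm: "demands (N2 q) (Tn 4) = {SA, SS, SX}" by (simp add: N2_def N2_demands_def G1_def G2_def G3_def)
  assume "s \<in> demands (N2 q) (Tn 4)"
  then show ?thesis unfolding dm ie by (auto simp: tn_simps)
qed

lemma tn_5: "s \<in> demands (N2 q) (Tn 5) \<Longrightarrow>
   (\<Sum>e\<in>in_edges (N2 q) (Tn 5). Bc q (Tn 5) s e *v yv q Ac Kc x e) = x s"
proof -
  have ie: "in_edges (N2 q) (Tn 5) = {(Vn 1, Tn 5), (Vn 2, Tn 5), (Vn 3, Tn 5), (Vn 4, Tn 5), (Vn 5, Tn 5)}"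
    unfolding in_edges_pair mem_edges_Tn by auto
  have dm: "demands (N2 q) (Tn 5) = {SA, SS, SY}" by (simp add: N2_def N2_demands_def G1_def G2_def G3_def)
  assume "s \<in> demands (N2 q) (Tn 5)"
  then show ?thesis unfolding dm ie by (auto simp: tn_simps)
qed

lemma tn_6: "s \<in> demands (N2 q) (Tn 6) \<Longrightarrow>
   (\<Sum>e\<in>in_edges (N2 q) (Tn 6). Bc q (Tn 6) s e *v yv q Ac Kc x e) = x s"
proof -
  have ie: "in_edges (N2 q) (Tn 6) = {(Vn 1, Tn 6), (Vn 2, Tn 6), (Vn 3, Tn 6), (Vn 4, Tn 6), (Vn 5, Tn 6)}"
    unfolding in_edges_pair mem_edges_Tn by auto
  have dm: "demands (N2 q) (Tn 6) = {SA, SS, SZ}" by (simp add: N2_def N2_demands_def G1_def G2_def G3_def)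
  assume "s \<in> demands (N2 q) (Tn 6)"
  then show ?thesis unfolding dm ie by (auto simp: tn_simps)
qed

lemma tn_7: "s \<in> demands (N2 q) (Tn 7) \<Longrightarrow>
   (\<Sum>e\<in>in_edges (N2 q) (Tn 7). Bc q (Tn 7) s e *v yv q Ac Kc x e) = x s"
proof -
  have ie: "in_edges (N2 q) (Tn 7) = {(Vn 1, Tn 7), (Vn 2, Tn 7), (Vn 3, Tn 7), (Vn 4, Tn 7), (Vn 5, Tn 7), (SW, Tn 7)}"
    unfolding in_edges_pair mem_edges_Tn by auto
  have dm: "demands (N2 q) (Tn 7) = {SA, SW, SX}" by (simp add: N2_def N2_demands_def G1_def G2_def G3_def)
  assume "s \<in> demands (N2 q) (Tn 7)"
  then show ?thesis unfolding dm ie by (auto simp: tn_simps)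
qed

lemma tn_8: "s \<in> demands (N2 q) (Tn 8) \<Longrightarrow>
   (\<Sum>e\<in>in_edges (N2 q) (Tn 8). Bc q (Tn 8) s e *v yv q Ac Kc x e) = x s"
proof -
  have ie: "in_edges (N2 q) (Tn 8) = {(Vn 1, Tn 8), (Vn 2, Tn 8), (Vn 3, Tn 8), (Vn 4, Tn 8), (Vn 5, Tn 8), (SW, Tn 8)}"
    unfolding in_edges_pair mem_edges_Tn by auto
  have dm: "demands (N2 q) (Tn 8) = {SA, SW, SY}" by (simp add: N2_def N2_demands_def G1_def G2_def G3_def)
  assume "s \<in> demands (N2 q) (Tn 8)"
  then show ?thesis unfolding dm ie by (auto simp: tn_simps)
qed

lemma tn_9: "s \<in> demands (N2 q) (Tn 9) \<Longrightarrow>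
   (\<Sum>e\<in>in_edges (N2 q) (Tn 9). Bc q (Tn 9) s e *v yv q Ac Kc x e) = x s"
proof -
  have ie: "in_edges (N2 q) (Tn 9) = {(Vn 1, Tn 9), (Vn 2, Tn 9), (Vn 3, Tn 9), (Vn 4, Tn 9), (Vn 5, Tn 9), (SW, Tn 9)}"
    unfolding in_edges_pair mem_edges_Tn by auto
  have dm: "demands (N2 q) (Tn 9) = {SA, SW, SZ}" by (simp add: N2_def N2_demands_def G1_def G2_def G3_def)
  assume "s \<in> demands (N2 q) (Tn 9)"
  then show ?thesis unfolding dm ie by (auto simp: tn_simps)
qed

lemma tn_10: "s \<in> demands (N2 q) (Tn 10) \<Longrightarrow>
   (\<Sum>e\<in>in_edges (N2 q) (Tn 10). Bc q (Tn 10) s e *v yv q Ac Kc x e) = x s"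
proof -
  have ie: "in_edges (N2 q) (Tn 10) = {(Vn 1, Tn 10), (Vn 2, Tn 10), (Vn 3, Tn 10), (Vn 4, Tn 10), (Vn 5, Tn 10)}"
    unfolding in_edges_pair mem_edges_Tn by auto
  have dm: "demands (N2 q) (Tn 10) = {SB, SR, SX}" by (simp add: N2_def N2_demands_def G1_def G2_def G3_def)
  assume "s \<in> demands (N2 q) (Tn 10)"
  then show ?thesis unfolding dm ie by (auto simp: tn_simps)
qed

lemma tn_11: "s \<in> demands (N2 q) (Tn 11) \<Longrightarrow>
   (\<Sum>e\<in>in_edges (N2 q) (Tn 11). Bc q (Tn 11) s e *v yv q Ac Kc x e) = x s"
proof -
  have ie: "in_edges (N2 q) (Tn 11) = {(Vn 1, Tn 11), (Vn 2, Tn 11), (Vn 3, Tn 11), (Vn 4, Tn 11), (Vn 5, Tn 11)}"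
    unfolding in_edges_pair mem_edges_Tn by auto
  have dm: "demands (N2 q) (Tn 11) = {SB, SR, SY}" by (simp add: N2_def N2_demands_def G1_def G2_def G3_def)
  assume "s \<in> demands (N2 q) (Tn 11)"
  then show ?thesis unfolding dm ie by (auto simp: tn_simps)
qed

lemma tn_12: "s \<in> demands (N2 q) (Tn 12) \<Longrightarrow>
   (\<Sum>e\<in>in_edges (N2 q) (Tn 12). Bc q (Tn 12) s e *v yv q Ac Kc x e) = x s"
proof -
  have ie: "in_edges (N2 q) (Tn 12) = {(Vn 1, Tn 12), (Vn 2, Tn 12), (Vn 3, Tn 12), (Vn 4, Tn 12), (Vn 5, Tn 12)}"
    unfolding in_edges_pair mem_edges_Tn by auto
  have dm: "demands (N2 q) (Tn 12) = {SB, SR, SZ}" by (simp add: N2_def N2_demands_def G1_def G2_def G3_def)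
  assume "s \<in> demands (N2 q) (Tn 12)"
  then show ?thesis unfolding dm ie by (auto simp: tn_simps)
qed

lemma tn_13: "s \<in> demands (N2 q) (Tn 13) \<Longrightarrow>
   (\<Sum>e\<in>in_edges (N2 q) (Tn 13). Bc q (Tn 13) s e *v yv q Ac Kc x e) = x s"
proof -
  have ie: "in_edges (N2 q) (Tn 13) = {(Vn 1, Tn 13), (Vn 2, Tn 13), (Vn 3, Tn 13), (Vn 4, Tn 13), (Vn 5, Tn 13)}"
    unfolding in_edges_pair mem_edges_Tn by auto
  have dm: "demands (N2 q) (Tn 13) = {SB, SS, SX}" by (simp add: N2_def N2_demands_def G1_def G2_def G3_def)
  assume "s \<in> demands (N2 q) (Tn 13)"
  then show ?thesis unfolding dm ie by (auto simp: tn_simps)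
qed

lemma tn_14: "s \<in> demands (N2 q) (Tn 14) \<Longrightarrow>
   (\<Sum>e\<in>in_edges (N2 q) (Tn 14). Bc q (Tn 14) s e *v yv q Ac Kc x e) = x s"
proof -
  have ie: "in_edges (N2 q) (Tn 14) = {(Vn 1, Tn 14), (Vn 2, Tn 14), (Vn 3, Tn 14), (Vn 4, Tn 14), (Vn 5, Tn 14)}"
    unfolding in_edges_pair mem_edges_Tn by auto
  have dm: "demands (N2 q) (Tn 14) = {SB, SS, SY}" by (simp add: N2_def N2_demands_def G1_def G2_def G3_def)
  assume "s \<in> demands (N2 q) (Tn 14)"
  then show ?thesis unfolding dm ie by (auto simp: tn_simps)
qed

lemma tn_15: "s \<in> demands (N2 q) (Tn 15) \<Longrightarrow>
   (\<Sum>e\<in>in_edges (N2 q) (Tn 15). Bc q (Tn 15) s e *v yv q Ac Kc x e) = x s"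
proof -
  have ie: "in_edges (N2 q) (Tn 15) = {(Vn 1, Tn 15), (Vn 2, Tn 15), (Vn 3, Tn 15), (Vn 4, Tn 15), (Vn 5, Tn 15)}"
    unfolding in_edges_pair mem_edges_Tn by auto
  have dm: "demands (N2 q) (Tn 15) = {SB, SS, SZ}" by (simp add: N2_def N2_demands_def G1_def G2_def G3_def)
  assume "s \<in> demands (N2 q) (Tn 15)"
  then show ?thesis unfolding dm ie by (auto simp: tn_simps)
qed

lemma tn_16: "s \<in> demands (N2 q) (Tn 16) \<Longrightarrow>
   (\<Sum>e\<in>in_edges (N2 q) (Tn 16). Bc q (Tn 16) s e *v yv q Ac Kc x e) = x s"
proof -
  have ie: "in_edges (N2 q) (Tn 16) = {(Vn 1, Tn 16), (Vn 2, Tn 16), (Vn 3, Tn 16), (Vn 4, Tn 16), (Vn 5, Tn 16), (SW, Tn 16)}"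
    unfolding in_edges_pair mem_edges_Tn by auto
  have dm: "demands (N2 q) (Tn 16) = {SB, SW, SX}" by (simp add: N2_def N2_demands_def G1_def G2_def G3_def)
  assume "s \<in> demands (N2 q) (Tn 16)"
  then show ?thesis unfolding dm ie by (auto simp: tn_simps)
qed

lemma tn_17: "s \<in> demands (N2 q) (Tn 17) \<Longrightarrow>
   (\<Sum>e\<in>in_edges (N2 q) (Tn 17). Bc q (Tn 17) s e *v yv q Ac Kc x e) = x s"
proof -
  have ie: "in_edges (N2 q) (Tn 17) = {(Vn 1, Tn 17), (Vn 2, Tn 17), (Vn 3, Tn 17), (Vn 4, Tn 17), (Vn 5, Tn 17), (SW, Tn 17)}"
    unfolding in_edges_pair mem_edges_Tn by auto
  have dm: "demands (N2 q) (Tn 17) = {SB, SW, SY}" by (simp add: N2_def N2_demands_def G1_def G2_def G3_def)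
  assume "s \<in> demands (N2 q) (Tn 17)"
  then show ?thesis unfolding dm ie by (auto simp: tn_simps)
qed

lemma tn_18: "s \<in> demands (N2 q) (Tn 18) \<Longrightarrow>
   (\<Sum>e\<in>in_edges (N2 q) (Tn 18). Bc q (Tn 18) s e *v yv q Ac Kc x e) = x s"
proof -
  have ie: "in_edges (N2 q) (Tn 18) = {(Vn 1, Tn 18), (Vn 2, Tn 18), (Vn 3, Tn 18), (Vn 4, Tn 18), (Vn 5, Tn 18), (SW, Tn 18)}"
    unfolding in_edges_pair mem_edges_Tn by auto
  have dm: "demands (N2 q) (Tn 18) = {SB, SW, SZ}" by (simp add: N2_def N2_demands_def G1_def G2_def G3_def)
  assume "s \<in> demands (N2 q) (Tn 18)"
  then show ?thesis unfolding dm ie by (auto simp: tn_simps)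
qed

lemma tn_19: "s \<in> demands (N2 q) (Tn 19) \<Longrightarrow>
   (\<Sum>e\<in>in_edges (N2 q) (Tn 19). Bc q (Tn 19) s e *v yv q Ac Kc x e) = x s"
proof -
  have ie: "in_edges (N2 q) (Tn 19) = {(Vn 1, Tn 19), (Vn 2, Tn 19), (Vn 3, Tn 19), (Vn 4, Tn 19), (Vn 5, Tn 19), (SC, Tn 19)}"
    unfolding in_edges_pair mem_edges_Tn by auto
  have dm: "demands (N2 q) (Tn 19) = {SC, SR, SX}" by (simp add: N2_def N2_demands_def G1_def G2_def G3_def)
  assume "s \<in> demands (N2 q) (Tn 19)"
  then show ?thesis unfolding dm ie by (auto simp: tn_simps)
qed

lemma tn_20: "s \<in> demands (N2 q) (Tn 20) \<Longrightarrow>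
   (\<Sum>e\<in>in_edges (N2 q) (Tn 20). Bc q (Tn 20) s e *v yv q Ac Kc x e) = x s"
proof -
  have ie: "in_edges (N2 q) (Tn 20) = {(Vn 1, Tn 20), (Vn 2, Tn 20), (Vn 3, Tn 20), (Vn 4, Tn 20), (Vn 5, Tn 20), (SC, Tn 20)}"
    unfolding in_edges_pair mem_edges_Tn by auto
  have dm: "demands (N2 q) (Tn 20) = {SC, SR, SY}" by (simp add: N2_def N2_demands_def G1_def G2_def G3_def)
  assume "s \<in> demands (N2 q) (Tn 20)"
  then show ?thesis unfolding dm ie by (auto simp: tn_simps)
qed

lemma tn_21: "s \<in> demands (N2 q) (Tn 21) \<Longrightarrow>
   (\<Sum>e\<in>in_edges (N2 q) (Tn 21). Bc q (Tn 21) s e *v yv q Ac Kc x e) = x s"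
proof -
  have ie: "in_edges (N2 q) (Tn 21) = {(Vn 1, Tn 21), (Vn 2, Tn 21), (Vn 3, Tn 21), (Vn 4, Tn 21), (Vn 5, Tn 21), (SC, Tn 21)}"
    unfolding in_edges_pair mem_edges_Tn by auto
  have dm: "demands (N2 q) (Tn 21) = {SC, SR, SZ}" by (simp add: N2_def N2_demands_def G1_def G2_def G3_def)
  assume "s \<in> demands (N2 q) (Tn 21)"
  then show ?thesis unfolding dm ie by (auto simp: tn_simps)
qed

lemma tn_22: "s \<in> demands (N2 q) (Tn 22) \<Longrightarrow>
   (\<Sum>e\<in>in_edges (N2 q) (Tn 22). Bc q (Tn 22) s e *v yv q Ac Kc x e) = x s"
proof -
  have ie: "in_edges (N2 q) (Tn 22) = {(Vn 1, Tn 22), (Vn 2, Tn 22), (Vn 3, Tn 22), (Vn 4, Tn 22), (Vn 5, Tn 22), (SC, Tn 22)}"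
    unfolding in_edges_pair mem_edges_Tn by auto
  have dm: "demands (N2 q) (Tn 22) = {SC, SS, SX}" by (simp add: N2_def N2_demands_def G1_def G2_def G3_def)
  assume "s \<in> demands (N2 q) (Tn 22)"
  then show ?thesis unfolding dm ie by (auto simp: tn_simps)
qed

lemma tn_23: "s \<in> demands (N2 q) (Tn 23) \<Longrightarrow>
   (\<Sum>e\<in>in_edges (N2 q) (Tn 23). Bc q (Tn 23) s e *v yv q Ac Kc x e) = x s"
proof -
  have ie: "in_edges (N2 q) (Tn 23) = {(Vn 1, Tn 23), (Vn 2, Tn 23), (Vn 3, Tn 23), (Vn 4, Tn 23), (Vn 5, Tn 23), (SC, Tn 23)}"
    unfolding in_edges_pair mem_edges_Tn by auto
  have dm: "demands (N2 q) (Tn 23) = {SC, SS, SY}" by (simp add: N2_def N2_demands_def G1_def G2_def G3_def)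
  assume "s \<in> demands (N2 q) (Tn 23)"
  then show ?thesis unfolding dm ie by (auto simp: tn_simps)
qed

lemma tn_24: "s \<in> demands (N2 q) (Tn 24) \<Longrightarrow>
   (\<Sum>e\<in>in_edges (N2 q) (Tn 24). Bc q (Tn 24) s e *v yv q Ac Kc x e) = x s"
proof -
  have ie: "in_edges (N2 q) (Tn 24) = {(Vn 1, Tn 24), (Vn 2, Tn 24), (Vn 3, Tn 24), (Vn 4, Tn 24), (Vn 5, Tn 24), (SC, Tn 24)}"
    unfolding in_edges_pair mem_edges_Tn by auto
  have dm: "demands (N2 q) (Tn 24) = {SC, SS, SZ}" by (simp add: N2_def N2_demands_def G1_def G2_def G3_def)
  assume "s \<in> demands (N2 q) (Tn 24)"
  then show ?thesis unfolding dm ie by (auto simp: tn_simps)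
qed

lemma tn_25: "s \<in> demands (N2 q) (Tn 25) \<Longrightarrow>
   (\<Sum>e\<in>in_edges (N2 q) (Tn 25). Bc q (Tn 25) s e *v yv q Ac Kc x e) = x s"
proof -
  have ie: "in_edges (N2 q) (Tn 25) = {(Vn 1, Tn 25), (Vn 2, Tn 25), (Vn 3, Tn 25), (Vn 4, Tn 25), (Vn 5, Tn 25), (SA, Tn 25), (Nn 1, Tn 25)}"
    unfolding in_edges_pair mem_edges_Tn by auto
  have dm: "demands (N2 q) (Tn 25) = {SC, SW, SX}" by (simp add: N2_def N2_demands_def G1_def G2_def G3_def)
  assume "s \<in> demands (N2 q) (Tn 25)"
  then show ?thesis unfolding dm ie by (auto simp: tn_simps)
qed

lemma tn_26: "s \<in> demands (N2 q) (Tn 26) \<Longrightarrow>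
   (\<Sum>e\<in>in_edges (N2 q) (Tn 26). Bc q (Tn 26) s e *v yv q Ac Kc x e) = x s"
proof -
  have ie: "in_edges (N2 q) (Tn 26) = {(Vn 1, Tn 26), (Vn 2, Tn 26), (Vn 3, Tn 26), (Vn 4, Tn 26), (Vn 5, Tn 26), (SY, Tn 26)}"
    unfolding in_edges_pair mem_edges_Tn by auto
  have dm: "demands (N2 q) (Tn 26) = {SC, SW, SY}" by (simp add: N2_def N2_demands_def G1_def G2_def G3_def)
  assume "s \<in> demands (N2 q) (Tn 26)"
  then show ?thesis unfolding dm ie by (auto simp: tn_simps)
qed

lemma tn_27: "s \<in> demands (N2 q) (Tn 27) \<Longrightarrow>
   (\<Sum>e\<in>in_edges (N2 q) (Tn 27). Bc q (Tn 27) s e *v yv q Ac Kc x e) = x s"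
proof -
  have ie: "in_edges (N2 q) (Tn 27) = {(Vn 1, Tn 27), (Vn 2, Tn 27), (Vn 3, Tn 27), (Vn 4, Tn 27), (Vn 5, Tn 27)}"
    unfolding in_edges_pair mem_edges_Tn by auto
  have dm: "demands (N2 q) (Tn 27) = {SC, SW, SZ}" by (simp add: N2_def N2_demands_def G1_def G2_def G3_def)
  assume "s \<in> demands (N2 q) (Tn 27)"
  then show ?thesis unfolding dm ie by (auto simp: tn_simps)
qed

lemma j27: "1 \<le> (j::nat) \<Longrightarrow> j \<le> 27 \<Longrightarrow> j = 1 \<or> j = 2 \<or> j = 3 \<or> j = 4 \<or> j = 5 \<or> j = 6 \<or> j = 7 \<or> j = 8 \<or> j = 9 \<or> j = 10 \<or> j = 11 \<or> j = 12 \<or> j = 13 \<or> j = 14 \<or> j = 15 \<or> j = 16 \<or> j = 17 \<or> j = 18 \<or> j = 19 \<or> j = 20 \<or> j = 21 \<or> j = 22 \<or> j = 23 \<or> j = 24 \<or> j = 25 \<or> j = 26 \<or> j = 27"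
  by (simp add: eval_nat_numeral le_Suc_eq)


lemma tn_dec: "1 \<le> j \<Longrightarrow> j \<le> 27 \<Longrightarrow> s \<in> demands (N2 q) (Tn j) \<Longrightarrow>
   (\<Sum>e\<in>in_edges (N2 q) (Tn j). Bc q (Tn j) s e *v yv q Ac Kc x e) = x s"
  by (drule (1) j27) (elim disjE; simp add: tn_1 tn_1[simplified] tn_2 tn_3 tn_4 tn_5 tn_6 tn_7 tn_8 tn_9 tn_10 tn_11 tn_12 tn_13 tn_14 tn_15 tn_16 tn_17 tn_18 tn_19 tn_20 tn_21 tn_22 tn_23 tn_24 tn_25 tn_26 tn_27)

lemma dem_other: "demands (N2 q) (Rho i) = {} \<or> i = 1 \<or> (2 \<le> i \<and> i \<le> q + 2) \<or> i = q + 3"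
  "demands (N2 q) (Rho 1) = {XB (q+2)}"
  "demands (N2 q) (Tn j) = {} \<or> (1 \<le> j \<and> j \<le> 27)"
  by (auto simp: N2_def N2_demands_def)

lemma if_dir:
  assumes q2: "2 \<le> q" and qz: "(of_nat q :: 'a::field) = 0"
  shows "is_vlnc_solution (N2 q) (Ac :: node \<times> node \<Rightarrow> 'a^2^2) Kc (Bc q)"
  unfolding sol_iff
proof (intro allI ballI)
  fix x :: "node \<Rightarrow> 'a^2" and t s assume s: "s \<in> demands (N2 q) t"
  show "(\<Sum>e\<in>in_edges (N2 q) t. Bc q t s e *v yv q Ac Kc x e) = x s"
  proof (cases t)
    case (Rho i)
    consider "i = 1" | "2 \<le> i \<and> i \<le> q + 1" | "i = q + 2" | "i = q + 3"
      using dem_other(1)[of q i] s Rho by force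
    then show ?thesis
    proof cases
      case 1
      then have "s = XB (q+2)" using s Rho dem_other(2)[of q] by simp
      then show ?thesis using dec_Rho1[OF q2] Rho 1 by simp
    next
      case 2
      then have "s = XB i" using s Rho dem_Rho(1)[of i q] by simp
      then show ?thesis using dec_Rho_mid[OF q2, of i] Rho 2 by simp
    next
      case 3
      then have "s = XB (q+2)" using s Rho dem_Rho(1)[of "q+2" q] by simp
      then show ?thesis using dec_Rho_q2'[OF q2] Rho 3 by simp
    next
      case 4
      then have "s = SA" using s Rho dem_Rho(2)[of q] by simp
      then show ?thesis using dec_Rho_q3'[OF q2 qz] Rho 4 by simp
    qed
  next
    case (Tn j)
    then have "1 \<le> j \<and> j \<le> 27" using dem_other(3)[of q j] s by force
    then show ?thesis using tn_dec s Tn by blast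
  qed (use s in \<open>auto simp: N2_def N2_demands_def\<close>)
qed

lemma only_if_dir:
  fixes A :: "node \<times> node \<Rightarrow> 'a::{finite,field}^2^2"
  assumes q2: "2 \<le> q" and sol: "is_vlnc_solution (N2 q) A K B"
  shows "CHAR('a) dvd q"
proof (rule ccontr)
  assume "\<not> CHAR('a) dvd q"
  then have "(of_nat q :: 'a) \<noteq> 0" by (simp add: of_nat_eq_0_iff_char_dvd)
  then have "Mq q A K 1 SX = 0" by (rule char_only_if[OF q2 _ sol])
  then show False by (rule m3_contra[OF q2 sol])
qed

theorem lemma9:
  fixes q' :: nat
  assumes "q' \<ge> 2"
  shows "(\<exists>(A :: node \<times> node \<Rightarrow> 'a::{finite,field}^2^2) K B. is_vlnc_solution (N2 q') A K B)
         \<longleftrightarrow> CHAR('a) dvd q'"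
proof
  assume "\<exists>(A :: node \<times> node \<Rightarrow> 'a::{finite,field}^2^2) K B. is_vlnc_solution (N2 q') A K B"
  then obtain A :: "node \<times> node \<Rightarrow> 'a^2^2" and K B where "is_vlnc_solution (N2 q') A K B" by blast
  then show "CHAR('a) dvd q'" using only_if_dir assms by blast
next
  assume "CHAR('a) dvd q'"
  then have "(of_nat q' :: 'a) = 0" by (simp add: of_nat_eq_0_iff_char_dvd)
  then have "is_vlnc_solution (N2 q') (Ac :: node \<times> node \<Rightarrow> 'a^2^2) Kc (Bc q')"
    by (rule if_dir[OF assms])
  then show "\<exists>(A :: node \<times> node \<Rightarrow> 'a::{finite,field}^2^2) K B. is_vlnc_solution (N2 q') A K B" by blast
qed

end
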